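(* Let $\Omega\subset\mathbb{R}^2$ be a bounded convex domain with $C^2$-smooth boundary of strictly positive curvature, normalized so that $\partial\Omega$ has length $1$, $0\in\Omega$ and $\omega_\Omega(0)=1$, and let $\gamma:[0,1]\to\mathbb{R}^2$ be an arc-length parametrization of $\partial\Omega$. Then there are constants $c,C>0$ such that $$c(1-r)^{3/2}\le\omega_{\frac12\Omega}(r\gamma(t))\le C(1-r)^{3/2},\qquad 0\le r<1,\ 0\le t<1.$$
   Context: $m$ is Lebesgue measure on $\mathbb{R}^2$, $\frac12\Omega=\{x/2:x\in\Omega\}$, and for bounded open convex $U$, $\omega_U(x)=m(U\cap(x-U))/\max_{y\in\mathbb{R}^2}m(U\cap(y-U))$. *)

theory Defs
  imports "HOL-Analysis.Analysis"
begin

definition covariogram :: "(real^2) set \<Rightarrow> real^2 \<Rightarrow> real" where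
  "covariogram U x = measure lebesgue (U \<inter> (\<lambda>y. x - y) ` U)"

text \<open>Normalized covariogram; the maximum over y is written as a supremum
  (it is attained for bounded open convex U).\<close>
definition omega :: "(real^2) set \<Rightarrow> real^2 \<Rightarrow> real" where
  "omega U x = covariogram U x / (SUP y. covariogram U y)"

definition half_set :: "(real^2) set \<Rightarrow> (real^2) set" where
  "half_set U = (\<lambda>x. (1/2) *\<^sub>R x) ` U"

end

theory Submission
  imports Defs
begin


definition J :: "real^2 \<Rightarrow> real^2" where "J x = vector [-(x$2), x$1]"

lemma J_comp [simp]: "J x $ 1 = -(x$2)" "J x $ 2 = x$1" by (simp_all add: J_def)
lemma inner2: "(x::real^2) \<bullet> y = x$1*y$1 + x$2*y$2" by (simp add: inner_vec_def sum_2)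
lemma norm2sq: "(norm (x::real^2))^2 = (x$1)^2 + (x$2)^2"
  by (simp only: power2_norm_eq_inner inner2) (simp add: power2_eq_square)
lemma J_inner_self [simp]: "J x \<bullet> x = 0" "x \<bullet> J x = 0" by (simp_all add: inner2)
lemma norm_J [simp]: "norm (J x) = norm x"
proof -
  have "(norm (J x))^2 = (norm x)^2" by (simp add: norm2sq)
  then show ?thesis by (simp add: power2_eq_iff_nonneg)
qed
lemma J_J [simp]: "J (J x) = - x" by (simp add: vec_eq_iff forall_2)
lemma J_add [simp]: "J (x + y) = J x + J y" by (simp add: vec_eq_iff forall_2)
lemma J_diff [simp]: "J (x - y) = J x - J y" by (simp add: vec_eq_iff forall_2)
lemma J_scale [simp]: "J (c *\<^sub>R x) = c *\<^sub>R J x" by (simp add: vec_eq_iff forall_2)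
lemma J_minus [simp]: "J (- x) = - J x" by (simp add: vec_eq_iff forall_2)
lemma J_inner_J [simp]: "J x \<bullet> J y = x \<bullet> y" by (simp add: inner2)
lemma decomp:
  assumes "norm T = 1"
  shows "v = (v \<bullet> T) *\<^sub>R T + (v \<bullet> J T) *\<^sub>R J T"
proof -
  have h: "(T$1)^2 + (T$2)^2 = 1" using assms norm2sq[of T] by simp
  show ?thesis
    unfolding vec_eq_iff forall_2
    by (simp add: inner2, intro conjI; use h in algebra)
qed

lemma linear_J: "linear J"
  by (rule linearI) simp_all

lemma sign_const:
  fixes k :: "real \<Rightarrow> real"
  assumes "continuous_on UNIV k" "\<And>s. k s \<noteq> 0"
  shows "k s * k 0 > 0"
proof (rule ccontr)
  assume a: "\<not> k s * k 0 > 0"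
  have c: "connected (k ` UNIV)"
    using assms(1) connected_UNIV connected_continuous_image by blast
  have "0 \<in> k ` UNIV"
  proof (cases "k s \<le> k 0")
    case True
    then have "k s \<le> 0" "0 \<le> k 0" using a by (auto simp: zero_less_mult_iff)
    then show ?thesis using connectedD_interval[OF c, of "k s" "k 0" 0] by auto
  next
    case False
    then have "k 0 \<le> 0" "0 \<le> k s" using a by (auto simp: zero_less_mult_iff)
    then show ?thesis using connectedD_interval[OF c, of "k 0" "k s" 0] by auto
  qed
  then show False using assms(2) by auto
qed

locale curve_setup =
  fixes \<Omega> :: "(real^2) set" and \<gamma> :: "real \<Rightarrow> real^2"
  assumes open_\<Omega>: "open \<Omega>" and conv: "convex \<Omega>" and bdd: "bounded \<Omega>"
    and zero_in: "0 \<in> \<Omega>"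
    and periodic: "\<And>t. \<gamma> (t + 1) = \<gamma> t"
    and inj: "inj_on \<gamma> {0..<1}"
    and image: "\<gamma> ` {0..1} = frontier \<Omega>"
    and diff1: "\<And>t. \<gamma> differentiable (at t)"
    and diff2: "\<And>t. (\<lambda>s. vector_derivative \<gamma> (at s)) differentiable (at t)"
    and cont2: "continuous_on UNIV
       (\<lambda>t. vector_derivative (\<lambda>s. vector_derivative \<gamma> (at s)) (at t))"
    and arclen: "\<And>t. norm (vector_derivative \<gamma> (at t)) = 1"
    and curv: "\<And>t. norm (vector_derivative (\<lambda>s. vector_derivative \<gamma> (at s)) (at t)) > 0"
begin

definition g1 where "g1 s = vector_derivative \<gamma> (at s)"
definition g2 where "g2 s = vector_derivative g1 (at s)"

lemma g1_eq: "g1 = (\<lambda>s. vector_derivative \<gamma> (at s))" by (rule ext) (simp add: g1_def)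

lemma g1_unit [simp]: "norm (g1 s) = 1" using arclen by (simp add: g1_def)
lemma g2_pos: "norm (g2 s) > 0" using curv by (simp add: g2_def g1_eq)
lemma d1: "(\<gamma> has_vector_derivative g1 s) (at s)"
  using diff1[of s] vector_derivative_works unfolding g1_def by blast
lemma d2: "(g1 has_vector_derivative g2 s) (at s)"
  using diff2[of s] vector_derivative_works unfolding g2_def g1_eq by blast
lemma cont_g2: "continuous_on UNIV g2" using cont2 by (simp add: g2_def g1_eq)
lemma cont_g1: "continuous_on UNIV g1"
  by (meson continuous_at_imp_continuous_on d2 has_vector_derivative_continuous)
lemma cont_gamma: "continuous_on UNIV \<gamma>"
  by (meson continuous_at_imp_continuous_on d1 has_vector_derivative_continuous)

lemma g1_g2_orth: "g1 s \<bullet> g2 s = 0"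
proof -
  have A: "((\<lambda>x. g1 x \<bullet> g1 x) has_derivative (\<lambda>h. g1 s \<bullet> (h *\<^sub>R g2 s) + (h *\<^sub>R g2 s) \<bullet> g1 s)) (at s)"
    using d2[of s, unfolded has_vector_derivative_def]
    by (intro has_derivative_inner) auto
  have "(\<lambda>x. g1 x \<bullet> g1 x) = (\<lambda>x. 1)"
    by (rule ext) (simp add: power2_norm_eq_inner[symmetric])
  then have B: "((\<lambda>x. g1 x \<bullet> g1 x) has_derivative (\<lambda>h. 0)) (at s)" by simp
  have "(\<lambda>h. g1 s \<bullet> (h *\<^sub>R g2 s) + (h *\<^sub>R g2 s) \<bullet> g1 s) = (\<lambda>h. 0)"
    using has_derivative_unique[OF A B] .
  then have "g1 s \<bullet> (1 *\<^sub>R g2 s) + (1 *\<^sub>R g2 s) \<bullet> g1 s = 0" by metis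
  then show ?thesis by (simp add: inner_commute)
qed

definition kk where "kk s = g2 s \<bullet> J (g1 s)"
definition \<sigma> where "\<sigma> = sgn (kk 0)"
definition nn where "nn s = \<sigma> *\<^sub>R J (g1 s)"
definition \<kappa> where "\<kappa> s = norm (g2 s)"

lemma g2_kk: "g2 s = kk s *\<^sub>R J (g1 s)"
  using decomp[OF g1_unit[of s], of "g2 s"] g1_g2_orth[of s]
  by (simp add: kk_def inner_commute)

lemma abs_kk: "\<bar>kk s\<bar> = \<kappa> s"
  using g2_kk[of s] by (simp add: \<kappa>_def)

lemma kappa_pos: "\<kappa> s > 0" using g2_pos by (simp add: \<kappa>_def)

lemma cont_kk: "continuous_on UNIV kk"
  unfolding kk_def
  by (intro continuous_on_inner cont_g2 linear_continuous_on_compose[OF cont_g1] linear_J)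

lemma kk_sign: "kk s * kk 0 > 0"
proof (rule sign_const[OF cont_kk])
  fix s show "kk s \<noteq> 0" using abs_kk[of s] kappa_pos[of s] by auto
qed

lemma sigma_sq [simp]: "\<sigma> * \<sigma> = 1"
proof -
  have "kk 0 \<noteq> 0" using kk_sign[of 0] by auto
  then show ?thesis by (simp add: \<sigma>_def sgn_if)
qed

lemma kk_sigma: "kk s = \<sigma> * \<kappa> s"
proof (cases "kk 0 > 0")
  case True
  then have "kk s > 0" using kk_sign[of s] zero_less_mult_pos2 by blast
  then show ?thesis using True abs_kk[of s] by (simp add: \<sigma>_def)
next
  case False
  then have "kk 0 < 0" using kk_sign[of 0] by (metis linorder_neqE_linordered_idom mult_zero_left order_less_irrefl)
  then have "kk s < 0" using kk_sign[of s] by (simp add: zero_less_mult_iff)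
  then show ?thesis using \<open>kk 0 < 0\<close> abs_kk[of s] by (simp add: \<sigma>_def)
qed

lemma g2_nn: "g2 s = \<kappa> s *\<^sub>R nn s"
  by (simp add: g2_kk kk_sigma nn_def)

lemma nn_unit [simp]: "norm (nn s) = 1"
proof -
  have "kk 0 \<noteq> 0" using kk_sign[of 0] by auto
  then have "\<bar>\<sigma>\<bar> = 1" by (simp add: \<sigma>_def sgn_if)
  then show ?thesis by (simp add: nn_def)
qed

lemma nn_g1 [simp]: "nn s \<bullet> g1 s = 0" "g1 s \<bullet> nn s = 0" by (simp_all add: nn_def)

lemma J_nn: "\<sigma> *\<^sub>R J (nn s) = - g1 s"
  by (simp add: nn_def scaleR_scaleR)

lemma gamma_nat: "\<gamma> (s + real n) = \<gamma> s"
proof (induction n)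
  case (Suc n)
  have "\<gamma> (s + real (Suc n)) = \<gamma> ((s + real n) + 1)" by (simp add: algebra_simps)
  also have "\<dots> = \<gamma> s" using periodic[of "s + real n"] Suc by simp
  finally show ?case .
qed simp

lemma gamma_int: "\<gamma> (s + of_int k) = \<gamma> s"
proof (cases "k \<ge> 0")
  case True
  then show ?thesis using gamma_nat[of s "nat k"] by simp
next
  case False
  then have "\<gamma> ((s + of_int k) + real (nat (-k))) = \<gamma> (s + of_int k)" by (rule_tac gamma_nat)
  then show ?thesis using False by simp
qed

lemma gamma_frac: "\<gamma> s = \<gamma> (s - of_int \<lfloor>s\<rfloor>)"
  using gamma_int[of s "- \<lfloor>s\<rfloor>"] by simp

lemma gamma_frontier: "\<gamma> s \<in> frontier \<Omega>"
proof -
  have "s - of_int \<lfloor>s\<rfloor> \<in> {0..1}"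
  proof -
    have "of_int \<lfloor>s\<rfloor> \<le> s" "s < of_int \<lfloor>s\<rfloor> + 1" using floor_correct[of s] by auto
    then show ?thesis by (simp del: of_int_add) linarith
  qed
  then show ?thesis using image gamma_frac[of s] by blast
qed

lemma gamma_closure: "\<gamma> s \<in> closure \<Omega>"
  using gamma_frontier frontier_def by blast

lemma gamma_notin: "\<gamma> s \<notin> \<Omega>"
  using gamma_frontier open_\<Omega> by (simp add: frontier_def interior_open)

lemma bound_closure: obtains M where "M > 0" "\<And>y. y \<in> closure \<Omega> \<Longrightarrow> norm y \<le> M"
proof -
  have "bounded (closure \<Omega>)" using bdd by (rule bounded_closure)
  then obtain M where "M > 0" "\<forall>x\<in>closure \<Omega>. norm x \<le> M" unfolding bounded_pos by auto
  then show ?thesis using that by auto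
qed

lemma cont_kappa: "continuous_on UNIV \<kappa>"
  unfolding \<kappa>_def by (intro continuous_on_norm cont_g2)

lemma kappa_bounds: obtains k0 k1 where "k0 > 0" "\<And>s. s \<in> {-3..4} \<Longrightarrow> k0 \<le> \<kappa> s \<and> \<kappa> s \<le> k1"
proof -
  have c: "continuous_on {-3..4::real} \<kappa>" using cont_kappa continuous_on_subset by blast
  obtain a where a: "a \<in> {-3..4::real}" "\<forall>y\<in>{-3..4}. \<kappa> a \<le> \<kappa> y"
    using continuous_attains_inf[OF compact_Icc _ c] by auto
  obtain b where b: "b \<in> {-3..4::real}" "\<forall>y\<in>{-3..4}. \<kappa> y \<le> \<kappa> b"
    using continuous_attains_sup[OF compact_Icc _ c] by auto
  show ?thesis using a b kappa_pos[of a] by (intro that[of "\<kappa> a" "\<kappa> b"]) auto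
qed

definition II where "II = {-3..4::real}"

lemma taylor_unif:
  assumes "\<epsilon> > 0"
  obtains \<delta> where "\<delta> > 0"
    "\<And>t u. t \<in> II \<Longrightarrow> t + u \<in> II \<Longrightarrow> \<bar>u\<bar> < \<delta> \<Longrightarrow>
        norm (g1 (t+u) - g1 t - u *\<^sub>R g2 t) \<le> \<epsilon> * \<bar>u\<bar>"
    "\<And>t u. t \<in> II \<Longrightarrow> t + u \<in> II \<Longrightarrow> \<bar>u\<bar> < \<delta> \<Longrightarrow>
        norm (\<gamma> (t+u) - \<gamma> t - u *\<^sub>R g1 t - (u^2/2) *\<^sub>R g2 t) \<le> \<epsilon> * u^2"
proof -
  have "uniformly_continuous_on II g2"
    unfolding II_def by (intro compact_uniformly_continuous continuous_on_subset[OF cont_g2]) auto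
  then obtain \<delta> where \<delta>: "\<delta> > 0" "\<And>x x'. x \<in> II \<Longrightarrow> x' \<in> II \<Longrightarrow> dist x' x < \<delta> \<Longrightarrow> dist (g2 x') (g2 x) < \<epsilon>"
    unfolding uniformly_continuous_on_def using assms by metis
  have seg: "{min t (t+u) .. max t (t+u)} \<subseteq> II" if "t \<in> II" "t + u \<in> II" for t u
    using that by (auto simp: II_def)
  have A: "norm (g1 (t+u) - g1 t - u *\<^sub>R g2 t) \<le> \<epsilon> * \<bar>u\<bar>"
    if tu: "t \<in> II" "t + u \<in> II" "\<bar>u\<bar> < \<delta>" for t u
  proof -
    let ?S = "{min t (t+u) .. max t (t+u)}"
    let ?f = "\<lambda>v. g1 v - v *\<^sub>R g2 t"
    have der: "(?f has_derivative (\<lambda>h. h *\<^sub>R (g2 x - g2 t))) (at x within ?S)" for x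
    proof -
      have "(g1 has_vector_derivative g2 x) (at x within ?S)"
        using d2[of x] has_vector_derivative_at_within by blast
      moreover have "((\<lambda>v. v *\<^sub>R g2 t) has_vector_derivative g2 t) (at x within ?S)"
        unfolding has_vector_derivative_def by (rule bounded_linear_imp_has_derivative[OF bounded_linear_scaleR_left])
      ultimately have "(?f has_vector_derivative (g2 x - g2 t)) (at x within ?S)"
        by (rule has_vector_derivative_diff)
      then show ?thesis by (simp add: has_vector_derivative_def)
    qed
    have bnd: "onorm (\<lambda>h. h *\<^sub>R (g2 x - g2 t)) \<le> \<epsilon>" if "x \<in> ?S" for x
    proof -
      have "x \<in> II" using seg[OF tu(1,2)] that by auto
      moreover have "dist x t < \<delta>" using that tu(3) by (auto simp: dist_real_def)
      ultimately have "dist (g2 x) (g2 t) < \<epsilon>" using \<delta>(2) tu(1) by blast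
      then show ?thesis
        by (simp add: onorm_scaleR_left[OF bounded_linear_ident] dist_norm onorm_id)
    qed
    have "norm (?f (t+u) - ?f t) \<le> \<epsilon> * norm ((t+u) - t)"
      by (rule differentiable_bound[OF convex_real_interval(5) der bnd]) auto
    then show ?thesis by (simp add: algebra_simps)
  qed
  have B: "norm (\<gamma> (t+u) - \<gamma> t - u *\<^sub>R g1 t - (u^2/2) *\<^sub>R g2 t) \<le> \<epsilon> * u^2"
    if tu: "t \<in> II" "t + u \<in> II" "\<bar>u\<bar> < \<delta>" for t u
  proof -
    let ?S = "{min t (t+u) .. max t (t+u)}"
    let ?f = "\<lambda>v. \<gamma> v - v *\<^sub>R g1 t - ((v - t)^2/2) *\<^sub>R g2 t"
    have der: "(?f has_derivative (\<lambda>h. h *\<^sub>R (g1 x - g1 t - (x - t) *\<^sub>R g2 t))) (at x within ?S)" for x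
    proof -
      have a: "(\<gamma> has_vector_derivative g1 x) (at x within ?S)"
        using d1[of x] has_vector_derivative_at_within by blast
      have b: "((\<lambda>v. v *\<^sub>R g1 t) has_vector_derivative g1 t) (at x within ?S)"
        unfolding has_vector_derivative_def by (rule bounded_linear_imp_has_derivative[OF bounded_linear_scaleR_left])
      have p: "((\<lambda>v. (v - t)^2/2) has_real_derivative (x - t)) (at x within ?S)"
        by (auto intro!: derivative_eq_intros)
      have c: "((\<lambda>v. ((v - t)^2/2) *\<^sub>R g2 t) has_vector_derivative ((x - t) *\<^sub>R g2 t)) (at x within ?S)"
        using has_vector_derivative_scaleR[OF p has_vector_derivative_const] by simp
      have "(?f has_vector_derivative (g1 x - g1 t - (x - t) *\<^sub>R g2 t)) (at x within ?S)"
        by (rule has_vector_derivative_diff[OF has_vector_derivative_diff[OF a b] c])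
      then show ?thesis by (simp add: has_vector_derivative_def)
    qed
    have bnd: "onorm (\<lambda>h. h *\<^sub>R (g1 x - g1 t - (x - t) *\<^sub>R g2 t)) \<le> \<epsilon> * \<bar>u\<bar>" if "x \<in> ?S" for x
    proof -
      have xI: "x \<in> II" using seg[OF tu(1,2)] that by auto
      have xt: "\<bar>x - t\<bar> \<le> \<bar>u\<bar>" using that by auto
      have "norm (g1 (t + (x - t)) - g1 t - (x - t) *\<^sub>R g2 t) \<le> \<epsilon> * \<bar>x - t\<bar>"
        using A[of t "x - t"] tu xI xt by auto
      also have "\<dots> \<le> \<epsilon> * \<bar>u\<bar>" using xt assms by (simp add: mult_left_mono)
      finally show ?thesis
        by (simp add: onorm_scaleR_left[OF bounded_linear_ident] onorm_id)
    qed
    have "norm (?f (t+u) - ?f t) \<le> (\<epsilon> * \<bar>u\<bar>) * norm ((t+u) - t)"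
      by (rule differentiable_bound[OF convex_real_interval(5) der bnd]) auto
    then show ?thesis by (simp add: algebra_simps power2_eq_square)
  qed
  show ?thesis using that[OF \<delta>(1)] A B by blast
qed

end



lemma LM_arith:
  fixes \<kappa> k0 k1 \<epsilon> u x z V :: real
  assumes k: "0 < k0" "k0 \<le> \<kappa>" "\<kappa> \<le> k1" and e: "0 < \<epsilon>" "\<epsilon> \<le> 1/2" "\<epsilon> * (13 + 6*k1) \<le> k0"
    and u: "\<bar>u\<bar> \<le> 1" and z: "z \<ge> (15 + 7*k1) * x^2"
    and V: "\<bar>V - (z + u^2 * \<kappa> / 2 - u * \<kappa> * x)\<bar> \<le> \<epsilon> * u^2 * (1 + k1) + \<epsilon> * \<bar>u\<bar> * (\<bar>x\<bar> + \<bar>z\<bar> + \<bar>u\<bar> * (2 + k1/2))"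
  shows "V \<ge> 0"
proof -
  define A where "A = (u - x)^2"
  define X where "X = x^2"
  define c where "c = 3 + 3 * k1 / 2"
  have k1: "k1 > 0" using k by linarith
  have A0: "A \<ge> 0" and X0: "X \<ge> 0" by (simp_all add: A_def X_def)
  have "(15 + 7*k1) * x^2 \<ge> 0" using k1 by simp
  then have z0: "z \<ge> 0" using z by linarith
  have c0: "c \<ge> 0" using k1 by (simp add: c_def)
  define E where "E = \<epsilon> * u^2 * (1 + k1) + \<epsilon> * \<bar>u\<bar> * (\<bar>x\<bar> + \<bar>z\<bar> + \<bar>u\<bar> * (2 + k1/2))"
  have L1: "V \<ge> z + (\<kappa>/2) * A - (\<kappa>/2) * X - E"
  proof -
    have "u^2 * \<kappa> / 2 - u * \<kappa> * x = (\<kappa>/2) * A - (\<kappa>/2) * X"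
      by (simp add: A_def X_def power2_eq_square algebra_simps)
    then show ?thesis using V unfolding E_def by linarith
  qed
  have Eeq: "E = c * (\<epsilon> * u^2) + \<epsilon> * \<bar>u * x\<bar> + (\<epsilon> * \<bar>u\<bar>) * z"
    using z0 by (simp add: E_def c_def abs_mult power2_eq_square algebra_simps)
  have Q1: "u^2 \<le> 2 * A + 2 * X"
  proof -
    have "2 * A + 2 * X - u^2 = (u - 2*x)^2" by (simp add: A_def X_def power2_eq_square algebra_simps)
    then show ?thesis by (metis diff_ge_0_iff_ge zero_le_power2)
  qed
  have Q2: "\<bar>u * x\<bar> \<le> A/2 + 3 * X / 2"
  proof -
    have a: "A/2 + 3 * X / 2 - u * x = (u - 2*x)^2 / 2" by (simp add: A_def X_def power2_eq_square field_simps)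
    have b: "A/2 + 3 * X / 2 + u * x = u^2 / 2 + 2 * x^2" by (simp add: A_def X_def power2_eq_square field_simps)
    have "0 \<le> (u - 2*x)^2 / 2" by simp
    moreover have "0 \<le> u^2 / 2 + 2 * x^2" by simp
    ultimately show ?thesis using a b by linarith
  qed
  have Q3: "(\<epsilon> * \<bar>u\<bar>) * z \<le> z / 2"
  proof -
    have "\<epsilon> * \<bar>u\<bar> \<le> 1/2 * 1" by (rule mult_mono) (use e u in auto)
    then show ?thesis using mult_right_mono[OF _ z0, of "\<epsilon> * \<bar>u\<bar>" "1/2"] by simp
  qed
  have Q4: "c * (\<epsilon> * u^2) \<le> c * (\<epsilon> * (2 * A + 2 * X))"
    using Q1 c0 e by (simp add: mult_left_mono)
  have Q5: "\<epsilon> * \<bar>u * x\<bar> \<le> \<epsilon> * (A/2 + 3 * X / 2)"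
    using Q2 e by (simp add: mult_left_mono)
  have Q6: "c * (\<epsilon> * (2 * A + 2 * X)) + \<epsilon> * (A/2 + 3 * X / 2) = (\<epsilon> * (13 + 6*k1) / 2) * A + (\<epsilon> * (2 * c + 3/2)) * X"
    by (simp add: c_def algebra_simps)
  have Q7: "(\<epsilon> * (13 + 6*k1) / 2) * A \<le> (\<kappa>/2) * A"
    by (rule mult_right_mono) (use e k A0 in auto)
  have Q8: "(\<epsilon> * (2 * c + 3/2)) * X \<le> ((2 * c + 3/2) / 2) * X"
    by (rule mult_right_mono) (use e c0 X0 in \<open>auto simp: mult_right_mono\<close>)
  have Q9: "(\<kappa>/2) * X + ((2 * c + 3/2) / 2) * X \<le> z / 2"
  proof -
    have "(\<kappa>/2) * X + ((2 * c + 3/2) / 2) * X = (\<kappa>/2 + (2 * c + 3/2) / 2) * X" by (simp add: algebra_simps)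
    also have "\<dots> \<le> ((15 + 7*k1)/2) * X"
    proof (rule mult_right_mono)
      show "\<kappa> / 2 + (2 * c + 3 / 2) / 2 \<le> (15 + 7 * k1) / 2" using k k1 unfolding c_def by (simp add: field_simps)
    qed (rule X0)
    also have "\<dots> \<le> z / 2" using z by (simp add: X_def)
    finally show ?thesis .
  qed
  show ?thesis using L1 Eeq Q3 Q4 Q5 Q6 Q7 Q8 Q9 by linarith
qed

context curve_setup begin

lemma abs_sigma: "\<bar>\<sigma>\<bar> = 1"
proof -
  have "kk 0 \<noteq> 0" using kk_sign[of 0] by auto
  then show ?thesis by (simp add: \<sigma>_def sgn_if)
qed

lemma nn_taylor: "norm (nn (t+u) - nn t + (u * \<kappa> t) *\<^sub>R g1 t) = norm (g1 (t+u) - g1 t - u *\<^sub>R g2 t)"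
proof -
  have "nn (t+u) - nn t + (u * \<kappa> t) *\<^sub>R g1 t = \<sigma> *\<^sub>R J (g1 (t+u) - g1 t - u *\<^sub>R g2 t)"
  proof -
    have "\<sigma> *\<^sub>R J (u *\<^sub>R g2 t) = (u * \<kappa> t) *\<^sub>R (\<sigma> *\<^sub>R J (nn t))"
      by (simp add: g2_nn scaleR_scaleR mult.commute mult.left_commute)
    also have "\<dots> = - (u * \<kappa> t) *\<^sub>R g1 t" using J_nn[of t] by simp
    finally have "\<sigma> *\<^sub>R J (u *\<^sub>R g2 t) = - (u * \<kappa> t) *\<^sub>R g1 t" .
    then show ?thesis by (simp add: nn_def algebra_simps)
  qed
  then show ?thesis using norm_J[of "g1 (t+u) - g1 t - u *\<^sub>R g2 t"] by (simp add: abs_sigma)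
qed

lemma nn_nn [simp]: "nn s \<bullet> nn s = 1"
  by (metis nn_unit norm_eq_1)

lemma nn_g2: "nn s \<bullet> g2 s = \<kappa> s" by (simp add: g2_nn)

lemma decomp_nn: "a \<bullet> g1 s = 0 \<Longrightarrow> a = (a \<bullet> nn s) *\<^sub>R nn s"
proof -
  assume h: "a \<bullet> g1 s = 0"
  have "a = (a \<bullet> g1 s) *\<^sub>R g1 s + (a \<bullet> J (g1 s)) *\<^sub>R J (g1 s)" by (rule decomp) simp
  also have "\<dots> = (a \<bullet> J (g1 s)) *\<^sub>R J (g1 s)" using h by simp
  also have "\<dots> = (a \<bullet> nn s) *\<^sub>R nn s"
    by (simp add: nn_def scaleR_scaleR mult.assoc[symmetric])
  finally show ?thesis .
qed

lemma II_mem: "s \<in> II \<longleftrightarrow> -3 \<le> s \<and> s \<le> 4" by (simp add: II_def)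

lemma support_unique:
  assumes s: "s \<in> {-2..3}" and a: "a \<noteq> 0" and sup: "\<And>y. y \<in> closure \<Omega> \<Longrightarrow> a \<bullet> y \<le> a \<bullet> \<gamma> s"
  shows "a \<bullet> g1 s = 0" "a \<bullet> nn s < 0"
proof -
  have "((\<lambda>x. a \<bullet> \<gamma> x) has_derivative (\<lambda>h. a \<bullet> (h *\<^sub>R g1 s))) (at s)"
    using d1[of s] unfolding has_vector_derivative_def by (rule has_derivative_inner_right)
  moreover have "(\<lambda>h. a \<bullet> (h *\<^sub>R g1 s)) = (*) (a \<bullet> g1 s)" by (rule ext) simp
  ultimately have D: "((\<lambda>x. a \<bullet> \<gamma> x) has_real_derivative (a \<bullet> g1 s)) (at s)"
    by (simp add: has_field_derivative_def)
  show g: "a \<bullet> g1 s = 0"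
    by (rule DERIV_local_max[OF D, of 1]) (auto intro: sup gamma_closure)
  have aeq: "a = (a \<bullet> nn s) *\<^sub>R nn s" by (rule decomp_nn[OF g])
  have ne: "a \<bullet> nn s \<noteq> 0" using a aeq by (metis scaleR_zero_left)
  show "a \<bullet> nn s < 0"
  proof (rule ccontr)
    assume "\<not> a \<bullet> nn s < 0"
    then have pos: "a \<bullet> nn s > 0" using ne by linarith
    obtain k0 k1 where k: "k0 > 0" "\<And>s. s \<in> {-3..4} \<Longrightarrow> k0 \<le> \<kappa> s \<and> \<kappa> s \<le> k1"
      using kappa_bounds by blast
    obtain \<delta> where \<delta>: "\<delta> > 0"
      "\<And>t u. t \<in> II \<Longrightarrow> t + u \<in> II \<Longrightarrow> \<bar>u\<bar> < \<delta> \<Longrightarrow>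
        norm (\<gamma> (t+u) - \<gamma> t - u *\<^sub>R g1 t - (u^2/2) *\<^sub>R g2 t) \<le> (k0/4) * u^2"
      using taylor_unif[of "k0/4"] k(1) by (metis divide_pos_pos zero_less_numeral)
    define u where "u = min (\<delta>/2) 1"
    have u: "u > 0" "u \<le> 1" "\<bar>u\<bar> < \<delta>" using \<delta>(1) by (auto simp: u_def)
    have sI: "s \<in> II" "s + u \<in> II" using s u by (auto simp: II_mem)
    define e where "e = \<gamma> (s+u) - \<gamma> s - u *\<^sub>R g1 s - (u^2/2) *\<^sub>R g2 s"
    have ne: "norm e \<le> (k0/4) * u^2" using \<delta>(2)[OF sI u(3)] by (simp add: e_def)
    have E1: "\<bar>nn s \<bullet> e\<bar> \<le> (k0/4) * u^2"
      using Cauchy_Schwarz_ineq2[of "nn s" e] ne by simp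
    have E2: "nn s \<bullet> (\<gamma> (s+u) - \<gamma> s) = (u^2/2) * \<kappa> s + nn s \<bullet> e"
      by (simp add: e_def inner_diff_right inner_add_right nn_g2)
    have "\<kappa> s \<ge> k0" using k(2)[of s] s by auto
    then have "(u^2/2) * \<kappa> s \<ge> (u^2/2) * k0" by (simp add: mult_left_mono)
    then have "nn s \<bullet> (\<gamma> (s+u) - \<gamma> s) \<ge> (u^2/2) * k0 - (k0/4) * u^2"
      using E1 E2 by linarith
    moreover have "(u^2/2) * k0 - (k0/4) * u^2 > 0" using u(1) k(1) by simp
    ultimately have "nn s \<bullet> (\<gamma> (s+u) - \<gamma> s) > 0" by linarith
    then have "a \<bullet> (\<gamma> (s+u) - \<gamma> s) > 0"
      by (subst aeq) (simp add: pos)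
    moreover have "a \<bullet> \<gamma> (s+u) \<le> a \<bullet> \<gamma> s" by (rule sup[OF gamma_closure])
    ultimately show False by (simp add: inner_diff_right)
  qed
qed

lemma support_line:
  assumes s: "s \<in> {-2..3}" and y: "y \<in> closure \<Omega>"
  shows "(y - \<gamma> s) \<bullet> nn s \<ge> 0"
proof -
  have ri: "rel_interior \<Omega> = \<Omega>" using open_\<Omega> by (rule rel_interior_open)
  obtain a where a: "a \<noteq> 0" "\<And>y. y \<in> closure \<Omega> \<Longrightarrow> a \<bullet> \<gamma> s \<le> a \<bullet> y"
    using supporting_hyperplane_relative_frontier[OF conv gamma_closure[of s]] gamma_notin[of s] ri
    by metis
  have "(-a) \<bullet> nn s < 0" "(-a) \<bullet> g1 s = 0"
    using support_unique[OF s, of "-a"] a by auto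
  then have pos: "a \<bullet> nn s > 0" and aeq: "a = (a \<bullet> nn s) *\<^sub>R nn s"
    using decomp_nn[of a s] by auto
  have "a \<bullet> (y - \<gamma> s) \<ge> 0" using a(2)[OF y] by (simp add: inner_diff_right)
  then have "(a \<bullet> nn s) * (nn s \<bullet> (y - \<gamma> s)) \<ge> 0"
    by (subst (asm) aeq) simp
  then show ?thesis using pos by (simp add: zero_le_mult_iff inner_commute)
qed

lemma basis2: "v = (v \<bullet> g1 s) *\<^sub>R g1 s + (v \<bullet> nn s) *\<^sub>R nn s"
proof -
  have "v = (v \<bullet> g1 s) *\<^sub>R g1 s + (v \<bullet> J (g1 s)) *\<^sub>R J (g1 s)" by (rule decomp) simp
  also have "(v \<bullet> J (g1 s)) *\<^sub>R J (g1 s) = (v \<bullet> nn s) *\<^sub>R nn s"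
    by (simp add: nn_def scaleR_scaleR mult.assoc[symmetric])
  finally show ?thesis .
qed

lemma norm_basis: "norm v \<le> \<bar>v \<bullet> g1 s\<bar> + \<bar>v \<bullet> nn s\<bar>"
proof -
  have "norm v = norm ((v \<bullet> g1 s) *\<^sub>R g1 s + (v \<bullet> nn s) *\<^sub>R nn s)" using basis2[of v s] by simp
  also have "\<dots> \<le> norm ((v \<bullet> g1 s) *\<^sub>R g1 s) + norm ((v \<bullet> nn s) *\<^sub>R nn s)" by (rule norm_triangle_ineq)
  finally show ?thesis by simp
qed

lemma expansion:
  assumes u1: "\<bar>u\<bar> \<le> 1" and e0: "0 < \<epsilon>" "\<epsilon> \<le> 1" and kt: "\<kappa> t \<le> k1"
   and T1: "norm (g1 (t+u) - g1 t - u *\<^sub>R g2 t) \<le> \<epsilon> * \<bar>u\<bar>"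
   and T2: "norm (\<gamma> (t+u) - \<gamma> t - u *\<^sub>R g1 t - (u^2/2) *\<^sub>R g2 t) \<le> \<epsilon> * u^2"
  shows "\<bar>(p - \<gamma> (t+u)) \<bullet> nn (t+u) - (((p - \<gamma> t) \<bullet> nn t) + u^2 * \<kappa> t / 2 - u * \<kappa> t * ((p - \<gamma> t) \<bullet> g1 t))\<bar>
     \<le> \<epsilon> * u^2 * (1 + k1) + \<epsilon> * \<bar>u\<bar> * (\<bar>(p - \<gamma> t) \<bullet> g1 t\<bar> + \<bar>(p - \<gamma> t) \<bullet> nn t\<bar> + \<bar>u\<bar> * (2 + k1/2))"
proof -
  define q T n \<kappa>t x z where "q = \<gamma> t" and "T = g1 t" and "n = nn t" and "\<kappa>t = \<kappa> t"
    and "x = (p - \<gamma> t) \<bullet> g1 t" and "z = (p - \<gamma> t) \<bullet> nn t"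
  define e1 where "e1 = \<gamma> (t+u) - \<gamma> t - u *\<^sub>R g1 t - (u^2/2) *\<^sub>R g2 t"
  define e3 where "e3 = nn (t+u) - nn t + (u * \<kappa> t) *\<^sub>R g1 t"
  have ne1: "norm e1 \<le> \<epsilon> * u^2" using T2 by (simp add: e1_def)
  have ne3: "norm e3 \<le> \<epsilon> * \<bar>u\<bar>" using T1 nn_taylor[of t u] by (simp add: e3_def)
  define D where "D = p - \<gamma> (t+u)"
  have Deq: "D = (p - q) - u *\<^sub>R T - (u^2/2 * \<kappa>t) *\<^sub>R n - e1"
    by (simp add: D_def e1_def q_def T_def n_def \<kappa>t_def g2_nn scaleR_scaleR)
  have Neq: "nn (t+u) = n - (u * \<kappa>t) *\<^sub>R T + e3"
    by (simp add: e3_def n_def T_def \<kappa>t_def)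
  have Tn: "T \<bullet> n = 0" "n \<bullet> T = 0" "T \<bullet> T = 1" "n \<bullet> n = 1"
    by (simp_all add: T_def n_def) (metis g1_unit norm_eq_1)
  have Dn: "D \<bullet> n = z - u^2/2 * \<kappa>t - e1 \<bullet> n"
    using Tn by (simp add: Deq inner_diff_left z_def q_def n_def)
  have DT: "D \<bullet> T = x - u - e1 \<bullet> T"
    using Tn by (simp add: Deq inner_diff_left x_def q_def T_def)
  have "D \<bullet> nn (t+u) = D \<bullet> n - (u * \<kappa>t) * (D \<bullet> T) + D \<bullet> e3"
    by (simp add: Neq inner_diff_right inner_add_right)
  also have "\<dots> = z + u^2 * \<kappa>t / 2 - u * \<kappa>t * x + (- (e1 \<bullet> n) + u * \<kappa>t * (e1 \<bullet> T) + D \<bullet> e3)"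
    by (simp add: Dn DT algebra_simps power2_eq_square)
  finally have Eq: "D \<bullet> nn (t+u) - (z + u^2 * \<kappa>t / 2 - u * \<kappa>t * x) = - (e1 \<bullet> n) + u * \<kappa>t * (e1 \<bullet> T) + D \<bullet> e3"
    by simp
  have nT: "norm T = 1" "norm n = 1" by (simp_all add: T_def n_def)
  have b1: "\<bar>e1 \<bullet> n\<bar> \<le> \<epsilon> * u^2"
    using Cauchy_Schwarz_ineq2[of e1 n] ne1 nT by simp
  have kpos: "\<kappa>t > 0" using kappa_pos by (simp add: \<kappa>t_def)
  have b2: "\<bar>u * \<kappa>t * (e1 \<bullet> T)\<bar> \<le> k1 * (\<epsilon> * u^2)"
  proof -
    have a: "\<bar>e1 \<bullet> T\<bar> \<le> \<epsilon> * u^2" using Cauchy_Schwarz_ineq2[of e1 T] ne1 nT by simp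
    have b: "\<bar>u * \<kappa>t\<bar> \<le> k1" using u1 kt kpos
    proof -
      have "\<bar>u\<bar> * \<kappa>t \<le> 1 * \<kappa>t" by (rule mult_right_mono) (use u1 kpos in auto)
      moreover have "\<bar>u * \<kappa>t\<bar> = \<bar>u\<bar> * \<kappa>t" using kpos by (simp add: abs_mult)
      ultimately show ?thesis using kt unfolding \<kappa>t_def by linarith
    qed
    have c: "0 \<le> \<bar>u * \<kappa>t\<bar>" by simp
    have "\<bar>u * \<kappa>t\<bar> * \<bar>e1 \<bullet> T\<bar> \<le> k1 * (\<epsilon> * u^2)"
      by (rule mult_mono[OF b a]) (use b c in linarith, simp)
    then show ?thesis by (simp add: abs_mult)
  qed
  have nD: "norm D \<le> \<bar>x\<bar> + \<bar>z\<bar> + \<bar>u\<bar> * (2 + k1/2)"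
  proof -
    have f1: "norm D \<le> norm (p - q) + norm (u *\<^sub>R T) + norm ((u^2/2 * \<kappa>t) *\<^sub>R n) + norm e1"
      using norm_triangle_ineq4[of "(p - q) - u *\<^sub>R T - (u^2/2 * \<kappa>t) *\<^sub>R n" e1]
        norm_triangle_ineq4[of "(p - q) - u *\<^sub>R T" "(u^2/2 * \<kappa>t) *\<^sub>R n"]
        norm_triangle_ineq4[of "p - q" "u *\<^sub>R T"] unfolding Deq by linarith
    have f2: "norm (p - q) \<le> \<bar>x\<bar> + \<bar>z\<bar>" using norm_basis[of "p - q" t] by (simp add: x_def z_def q_def)
    have f3: "norm (u *\<^sub>R T) = \<bar>u\<bar>" using nT by simp
    have f4: "norm ((u^2/2 * \<kappa>t) *\<^sub>R n) \<le> \<bar>u\<bar> * (k1/2)"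
    proof -
      have "norm ((u^2/2 * \<kappa>t) *\<^sub>R n) = \<bar>u\<bar> * (\<bar>u\<bar> * \<kappa>t / 2)" using nT kpos
        by (simp add: abs_mult power2_eq_square)
      moreover have "\<bar>u\<bar> * \<kappa>t \<le> k1" using u1 kt kpos \<kappa>t_def
      proof -
        have "\<bar>u\<bar> * \<kappa>t \<le> 1 * \<kappa>t" by (rule mult_right_mono) (use u1 kpos in auto)
        then show ?thesis using kt unfolding \<kappa>t_def by linarith
      qed
      ultimately show ?thesis by (simp add: mult_left_mono)
    qed
    have f5: "norm e1 \<le> \<bar>u\<bar>"
    proof -
      have "\<epsilon> * u^2 \<le> 1 * \<bar>u\<bar>" using e0 u1
      proof -
        have "\<epsilon> * u^2 \<le> 1 * u^2" by (rule mult_right_mono) (use e0 in auto)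
        moreover have "\<bar>u\<bar> * \<bar>u\<bar> \<le> 1 * \<bar>u\<bar>" by (rule mult_right_mono[OF u1]) simp
        ultimately show ?thesis by (simp add: power2_eq_square abs_mult[symmetric])
      qed
      then show ?thesis using ne1 by simp
    qed
    have f6: "\<bar>u\<bar> * (2 + k1/2) = 2 * \<bar>u\<bar> + \<bar>u\<bar> * (k1/2)" by (simp add: algebra_simps)
    show ?thesis using f1 f2 f3 f4 f5 f6 by linarith
  qed
  have b3: "\<bar>D \<bullet> e3\<bar> \<le> \<epsilon> * \<bar>u\<bar> * (\<bar>x\<bar> + \<bar>z\<bar> + \<bar>u\<bar> * (2 + k1/2))"
  proof -
    have "\<bar>D \<bullet> e3\<bar> \<le> norm D * norm e3" by (rule Cauchy_Schwarz_ineq2)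
    also have "\<dots> \<le> (\<bar>x\<bar> + \<bar>z\<bar> + \<bar>u\<bar> * (2 + k1/2)) * (\<epsilon> * \<bar>u\<bar>)"
      by (rule mult_mono[OF nD ne3]) (use nD norm_ge_zero[of D] in linarith, simp)
    finally show ?thesis by (simp add: algebra_simps)
  qed
  have "\<bar>D \<bullet> nn (t+u) - (z + u^2 * \<kappa>t / 2 - u * \<kappa>t * x)\<bar>
      \<le> \<epsilon> * u^2 + k1 * (\<epsilon> * u^2) + \<epsilon> * \<bar>u\<bar> * (\<bar>x\<bar> + \<bar>z\<bar> + \<bar>u\<bar> * (2 + k1/2))"
    unfolding Eq using b1 b2 b3 by linarith
  then show ?thesis by (simp add: D_def x_def z_def \<kappa>t_def algebra_simps)
qed

lemma upper_width:
  obtains K h0 where "K > 0" "h0 > 0"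
    "\<And>t y h. t \<in> {0..1} \<Longrightarrow> y \<in> closure \<Omega> \<Longrightarrow> 0 < h \<Longrightarrow> h \<le> h0 \<Longrightarrow>
       (y - \<gamma> t) \<bullet> nn t \<le> h \<Longrightarrow> \<bar>(y - \<gamma> t) \<bullet> g1 t\<bar> \<le> K * sqrt h"
proof -
  obtain k0 k1 where k: "k0 > 0" "\<And>s. s \<in> {-3..4} \<Longrightarrow> k0 \<le> \<kappa> s \<and> \<kappa> s \<le> k1"
    using kappa_bounds by blast
  have k01: "k0 \<le> k1" using k(2)[of 0] by auto
  define \<epsilon> where "\<epsilon> = min (k0/2) 1"
  have e: "\<epsilon> > 0" "\<epsilon> \<le> k0/2" "\<epsilon> \<le> 1" using k(1) by (auto simp: \<epsilon>_def)
  obtain \<delta> where \<delta>: "\<delta> > 0"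
    "\<And>t u. t \<in> II \<Longrightarrow> t + u \<in> II \<Longrightarrow> \<bar>u\<bar> < \<delta> \<Longrightarrow>
        norm (g1 (t+u) - g1 t - u *\<^sub>R g2 t) \<le> \<epsilon> * \<bar>u\<bar>"
    "\<And>t u. t \<in> II \<Longrightarrow> t + u \<in> II \<Longrightarrow> \<bar>u\<bar> < \<delta> \<Longrightarrow>
        norm (\<gamma> (t+u) - \<gamma> t - u *\<^sub>R g1 t - (u^2/2) *\<^sub>R g2 t) \<le> \<epsilon> * u^2"
    using taylor_unif[OF e(1)] by metis
  define r0 where "r0 = min (\<delta>/2) 1"
  have r0: "r0 > 0" "r0 < \<delta>" "r0 \<le> 1" using \<delta>(1) by (auto simp: r0_def)
  define K where "K = 2 * (5 + 2 * k1) / k0"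
  have Kpos: "K > 0" using k(1) k01 by (simp add: K_def)
  show ?thesis
  proof (rule that[OF Kpos, of "r0^2"])
    show "r0^2 > 0" using r0 by simp
    fix t y h assume t: "t \<in> {0..1}" and y: "y \<in> closure \<Omega>" and h: "0 < h" "h \<le> r0^2"
      and yh: "(y - \<gamma> t) \<bullet> nn t \<le> h"
    define x where "x = (y - \<gamma> t) \<bullet> g1 t"
    define z where "z = (y - \<gamma> t) \<bullet> nn t"
    define r where "r = sqrt h"
    have r: "r > 0" "r * r = h" "r \<le> r0"
    proof -
      show "r > 0" using h by (simp add: r_def)
      show "r * r = h" using h by (simp add: r_def)
      have "sqrt h \<le> sqrt (r0^2)" using h by (rule_tac real_sqrt_le_mono) simp
      then show "r \<le> r0" using r0 by (simp add: r_def)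
    qed
    define u where "u = (if x \<ge> 0 then r else - r)"
    have u: "\<bar>u\<bar> = r" "u * x = r * \<bar>x\<bar>" "u^2 = h" using r by (auto simp: u_def power2_eq_square)
    have u1: "\<bar>u\<bar> \<le> 1" "\<bar>u\<bar> < \<delta>" using u r r0 by auto
    have tI: "t \<in> II" "t + u \<in> II" "t + u \<in> {-2..3}" using t u1 by (auto simp: II_mem)
    have z0: "z \<ge> 0" using support_line[of t y] t y by (simp add: z_def)
    have zh: "z \<le> h" using yh by (simp add: z_def)
    have kt: "k0 \<le> \<kappa> t" "\<kappa> t \<le> k1" using k(2)[of t] t by auto
    have ex: "\<bar>(y - \<gamma> (t+u)) \<bullet> nn (t+u) - (z + u^2 * \<kappa> t / 2 - u * \<kappa> t * x)\<bar>
     \<le> \<epsilon> * u^2 * (1 + k1) + \<epsilon> * \<bar>u\<bar> * (\<bar>x\<bar> + \<bar>z\<bar> + \<bar>u\<bar> * (2 + k1/2))"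
      using expansion[OF u1(1) e(1) e(3) kt(2) \<delta>(2)[OF tI(1,2) u1(2)] \<delta>(3)[OF tI(1,2) u1(2)], of y]
      by (simp add: x_def z_def)
    have sl: "(y - \<gamma> (t+u)) \<bullet> nn (t+u) \<ge> 0" using support_line[OF tI(3) y] by simp
    have P1: "u * \<kappa> t * x = \<kappa> t * (r * \<bar>x\<bar>)" using u(2) by (simp add: algebra_simps)
    have P2: "\<epsilon> * u^2 * (1 + k1) \<le> h * (1 + k1)"
    proof -
      have "\<epsilon> * h \<le> 1 * h" by (rule mult_right_mono) (use e h in auto)
      then show ?thesis using u(3) k(1) k01 by (simp add: mult_right_mono)
    qed
    have P3: "\<epsilon> * \<bar>u\<bar> * (\<bar>x\<bar> + \<bar>z\<bar> + \<bar>u\<bar> * (2 + k1/2)) = \<epsilon> * (r * \<bar>x\<bar>) + (\<epsilon> * r) * z + \<epsilon> * h * (2 + k1/2)"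
      using u(1) z0 r(2) by (simp add: algebra_simps)
    have er: "\<epsilon> * r \<le> 1" using e r r0 mult_mono[of \<epsilon> 1 r 1] by auto
    have P4: "(\<epsilon> * r) * z \<le> z" using mult_right_mono[OF er z0] by simp
    have P5: "\<epsilon> * h * (2 + k1/2) \<le> h * (2 + k1/2)"
    proof -
      have "\<epsilon> * h \<le> 1 * h" by (rule mult_right_mono) (use e h in auto)
      then show ?thesis using k(1) k01 by (simp add: mult_right_mono)
    qed
    have P6: "u^2 * \<kappa> t / 2 \<le> h * k1 / 2" using u(3) kt h by (simp add: mult_left_mono)
    have main: "\<kappa> t * (r * \<bar>x\<bar>) \<le> h * (5 + 2 * k1) + \<epsilon> * (r * \<bar>x\<bar>)"
    proof -
      have "\<kappa> t * (r * \<bar>x\<bar>) \<le> z + u^2 * \<kappa> t / 2 + \<epsilon> * u^2 * (1 + k1) + \<epsilon> * \<bar>u\<bar> * (\<bar>x\<bar> + \<bar>z\<bar> + \<bar>u\<bar> * (2 + k1/2))"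
        using ex sl P1 by linarith
      also have "\<dots> \<le> h * (5 + 2 * k1) + \<epsilon> * (r * \<bar>x\<bar>)"
        using P2 P3 P4 P5 P6 zh by (simp add: algebra_simps)
      finally show ?thesis .
    qed
    have P7: "(k0/2) * (r * \<bar>x\<bar>) \<le> (\<kappa> t - \<epsilon>) * (r * \<bar>x\<bar>)"
      by (rule mult_right_mono) (use kt e r in auto)
    have "(k0/2) * (r * \<bar>x\<bar>) \<le> r * (r * (5 + 2 * k1))"
    proof -
      have "(\<kappa> t - \<epsilon>) * (r * \<bar>x\<bar>) = \<kappa> t * (r * \<bar>x\<bar>) - \<epsilon> * (r * \<bar>x\<bar>)" by (simp add: left_diff_distrib)
      moreover have "h * (5 + 2 * k1) = r * (r * (5 + 2 * k1))" using r(2) by (simp add: mult.assoc[symmetric])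
      ultimately show ?thesis using main P7 by linarith
    qed
    moreover have "(k0/2) * (r * \<bar>x\<bar>) = r * ((k0/2) * \<bar>x\<bar>)" by (simp only: mult.left_commute)
    ultimately have "r * ((k0/2) * \<bar>x\<bar>) \<le> r * (r * (5 + 2 * k1))" by (simp only:)
    then have "(k0/2) * \<bar>x\<bar> \<le> r * (5 + 2 * k1)"
      using r(1) by (rule mult_left_le_imp_le)
    then have "\<bar>x\<bar> \<le> K * r"
      using k(1) by (simp add: K_def field_simps)
    then show "\<bar>(y - \<gamma> t) \<bullet> g1 t\<bar> \<le> K * sqrt h" by (simp add: x_def r_def)
  qed
qed

lemma frac_in: "x - of_int \<lfloor>x\<rfloor> \<in> {0..<1}"
proof -
  have "of_int \<lfloor>x\<rfloor> \<le> x" "x < of_int \<lfloor>x\<rfloor> + 1" using floor_correct[of x] by auto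
  then show ?thesis by simp
qed

lemma gamma_eq_int:
  assumes "\<gamma> x = \<gamma> y" shows "\<exists>k::int. x - y = of_int k"
proof -
  have "\<gamma> (x - of_int \<lfloor>x\<rfloor>) = \<gamma> (y - of_int \<lfloor>y\<rfloor>)" using assms gamma_frac by metis
  then have "x - of_int \<lfloor>x\<rfloor> = y - of_int \<lfloor>y\<rfloor>"
    using inj frac_in[of x] frac_in[of y] by (meson inj_onD)
  then have "x - y = of_int (\<lfloor>x\<rfloor> - \<lfloor>y\<rfloor>)" by simp
  then show ?thesis by blast
qed

lemma sep:
  assumes "\<delta> > 0"
  obtains m where "m > 0" "\<And>t v. t \<in> {0..1} \<Longrightarrow> \<delta> \<le> \<bar>v\<bar> \<Longrightarrow> \<bar>v\<bar> \<le> 1/2 \<Longrightarrow> m \<le> norm (\<gamma> (t+v) - \<gamma> t)"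
proof (cases "\<delta> \<le> 1/2")
  case False
  show ?thesis by (rule that[of 1]) (use False in auto)
next
  case True
  define C where "C = {0..1::real} \<times> ({-1/2..-\<delta>} \<union> {\<delta>..1/2})"
  define f where "f = (\<lambda>p::real\<times>real. norm (\<gamma> (fst p + snd p) - \<gamma> (fst p)))"
  have cC: "compact C" unfolding C_def by (intro compact_Times compact_Un compact_Icc)
  have neC: "C \<noteq> {}" using True by (auto simp: C_def)
  have cf: "continuous_on C f"
  proof -
    have a: "continuous_on UNIV (\<lambda>p::real\<times>real. fst p + snd p)" by (intro continuous_intros)
    have b: "continuous_on UNIV (\<lambda>p::real\<times>real. fst p)" by (intro continuous_intros)
    have c1: "continuous_on UNIV (\<lambda>p::real\<times>real. \<gamma> (fst p + snd p))"
      by (rule continuous_on_compose2[OF cont_gamma a subset_UNIV])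
    have c2: "continuous_on UNIV (\<lambda>p::real\<times>real. \<gamma> (fst p))"
      by (rule continuous_on_compose2[OF cont_gamma b subset_UNIV])
    have "continuous_on UNIV f" unfolding f_def
      by (intro continuous_on_norm continuous_on_diff c1 c2)
    then show ?thesis using continuous_on_subset by blast
  qed
  obtain p where p: "p \<in> C" "\<And>q. q \<in> C \<Longrightarrow> f p \<le> f q"
    using continuous_attains_inf[OF cC neC cf] by blast
  have pos: "f p > 0"
  proof (rule ccontr)
    assume "\<not> f p > 0"
    then have "\<gamma> (fst p + snd p) = \<gamma> (fst p)" by (simp add: f_def)
    from gamma_eq_int[OF this] obtain k :: int where "fst p + snd p - fst p = of_int k" by blast
    then have k: "snd p = of_int k" by simp
    have "\<delta> \<le> \<bar>snd p\<bar>" "\<bar>snd p\<bar> \<le> 1/2" using p(1) assms by (auto simp: C_def abs_if)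
    then have "\<bar>of_int k :: real\<bar> \<le> 1/2" "\<bar>of_int k :: real\<bar> > 0" using k assms by auto
    then have "k \<noteq> 0" by auto
    then have "1 \<le> \<bar>k\<bar>" by presburger
    then have "(1::real) \<le> \<bar>of_int k\<bar>" by (metis of_int_1_le_iff of_int_abs)
    then show False using \<open>\<bar>of_int k :: real\<bar> \<le> 1/2\<close> by linarith
  qed
  show ?thesis
  proof (rule that[OF pos])
    fix t v :: real assume "t \<in> {0..1}" "\<delta> \<le> \<bar>v\<bar>" "\<bar>v\<bar> \<le> 1/2"
    then have "(t, v) \<in> C" by (auto simp: C_def)
    from p(2)[OF this] show "f p \<le> norm (\<gamma> (t+v) - \<gamma> t)" by (simp add: f_def)
  qed
qed

lemma depth:
  obtains \<beta> where "\<beta> > 0" "ball 0 \<beta> \<subseteq> \<Omega>" "\<And>s. s \<in> {-2..3} \<Longrightarrow> \<gamma> s \<bullet> nn s \<le> - \<beta>/2"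
proof -
  obtain \<beta> where b: "\<beta> > 0" "ball 0 \<beta> \<subseteq> \<Omega>" using open_\<Omega> zero_in open_contains_ball by blast
  have "\<gamma> s \<bullet> nn s \<le> - \<beta>/2" if s: "s \<in> {-2..3}" for s
  proof -
    have "- (\<beta>/2) *\<^sub>R nn s \<in> ball 0 \<beta>" using b(1) by simp
    then have "- (\<beta>/2) *\<^sub>R nn s \<in> closure \<Omega>" using b(2) closure_subset by blast
    from support_line[OF s this] show ?thesis by (simp add: inner_diff_right inner_commute)
  qed
  then show ?thesis using that b by blast
qed

end


context curve_setup begin

lemma local_membership:
  obtains \<rho> K2 where "\<rho> > 0" "K2 > 0"
    "\<And>t p. t \<in> {0..1} \<Longrightarrow> norm (p - \<gamma> t) \<le> \<rho> \<Longrightarrow>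
       (p - \<gamma> t) \<bullet> nn t \<ge> K2 * ((p - \<gamma> t) \<bullet> g1 t)^2 \<Longrightarrow> p \<in> closure \<Omega>"
proof -
  obtain k0 k1 where k: "k0 > 0" "\<And>s. s \<in> {-3..4} \<Longrightarrow> k0 \<le> \<kappa> s \<and> \<kappa> s \<le> k1"
    using kappa_bounds by blast
  have k01: "k0 \<le> k1" using k(2)[of 0] by auto
  define \<epsilon> where "\<epsilon> = min (1/2) (k0 / (13 + 6*k1))"
  have e: "\<epsilon> > 0" "\<epsilon> \<le> 1/2" "\<epsilon> * (13 + 6*k1) \<le> k0"
  proof -
    have p: "13 + 6*k1 > 0" using k(1) k01 by linarith
    show "\<epsilon> > 0" using k(1) p by (simp add: \<epsilon>_def)
    show "\<epsilon> \<le> 1/2" unfolding \<epsilon>_def by (rule min.cobounded1)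
    have "\<epsilon> \<le> k0 / (13 + 6*k1)" by (simp add: \<epsilon>_def)
    then show "\<epsilon> * (13 + 6*k1) \<le> k0" using p by (simp add: pos_le_divide_eq)
  qed
  obtain \<delta> where \<delta>: "\<delta> > 0"
    "\<And>t u. t \<in> II \<Longrightarrow> t + u \<in> II \<Longrightarrow> \<bar>u\<bar> < \<delta> \<Longrightarrow>
        norm (g1 (t+u) - g1 t - u *\<^sub>R g2 t) \<le> \<epsilon> * \<bar>u\<bar>"
    "\<And>t u. t \<in> II \<Longrightarrow> t + u \<in> II \<Longrightarrow> \<bar>u\<bar> < \<delta> \<Longrightarrow>
        norm (\<gamma> (t+u) - \<gamma> t - u *\<^sub>R g1 t - (u^2/2) *\<^sub>R g2 t) \<le> \<epsilon> * u^2"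
    using taylor_unif[OF e(1)] by metis
  define \<delta>1 where "\<delta>1 = min \<delta> 1"
  have d1: "\<delta>1 > 0" using \<delta>(1) by (simp add: \<delta>1_def)
  obtain m where m: "m > 0" "\<And>t v. t \<in> {0..1} \<Longrightarrow> \<delta>1 \<le> \<bar>v\<bar> \<Longrightarrow> \<bar>v\<bar> \<le> 1/2 \<Longrightarrow> m \<le> norm (\<gamma> (t+v) - \<gamma> t)"
    using sep[OF d1] by blast
  define K2 where "K2 = 15 + 7*k1"
  show ?thesis
  proof (rule that[of "m/4" K2])
    show "m/4 > 0" using m(1) by simp
    show "K2 > 0" using k(1) k01 by (simp add: K2_def)
    fix t p assume t: "t \<in> {0..1}" and pr: "norm (p - \<gamma> t) \<le> m/4"
      and pz: "(p - \<gamma> t) \<bullet> nn t \<ge> K2 * ((p - \<gamma> t) \<bullet> g1 t)^2"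
    show "p \<in> closure \<Omega>"
    proof (rule ccontr)
      assume pn: "p \<notin> closure \<Omega>"
      have ne: "closure \<Omega> \<noteq> {}" using zero_in closure_subset by blast
      obtain \<pi> where \<pi>1: "\<pi> \<in> closure \<Omega>" and \<pi>2: "\<And>y. y \<in> closure \<Omega> \<Longrightarrow> dist p \<pi> \<le> dist p y"
        using distance_attains_inf[OF closed_closure ne, where a=p] by metis
      have \<pi>: "\<pi> \<in> closure \<Omega>" "\<forall>y\<in>closure \<Omega>. dist p \<pi> \<le> dist p y" using \<pi>1 \<pi>2 by auto
      define a where "a = p - \<pi>"
      have a0: "a \<noteq> 0" using pn \<pi>(1) by (auto simp: a_def)
      have dot: "a \<bullet> (y - \<pi>) \<le> 0" if "y \<in> closure \<Omega>" for y
        using any_closest_point_dot[OF convex_closure[OF conv] closed_closure \<pi>(1) that \<pi>(2)]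
        by (simp add: a_def)
      have \<pi>not: "\<pi> \<notin> \<Omega>"
      proof
        assume "\<pi> \<in> \<Omega>"
        then obtain e where e: "e > 0" "ball \<pi> e \<subseteq> \<Omega>" using open_\<Omega> open_contains_ball by blast
        have na: "norm a > 0" using a0 by simp
        define y where "y = \<pi> + (e / (2 * norm a)) *\<^sub>R a"
        have "dist \<pi> y = e / 2" using na e(1) by (simp add: y_def dist_norm)
        then have "y \<in> ball \<pi> e" using e(1) by simp
        then have "y \<in> closure \<Omega>" using e(2) closure_subset by blast
        then have "a \<bullet> (y - \<pi>) \<le> 0" by (rule dot)
        moreover have "a \<bullet> (y - \<pi>) = (e / (2 * norm a)) * (a \<bullet> a)" by (simp add: y_def)
        moreover have "(e / (2 * norm a)) * (a \<bullet> a) > 0" using na e(1) a0 by simp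
        ultimately show False by linarith
      qed
      have "\<pi> \<in> frontier \<Omega>" using \<pi>(1) \<pi>not open_\<Omega> by (simp add: frontier_def interior_open)
      then have "\<pi> \<in> \<gamma> ` {0..1}" using image by simp
      then obtain s1 where s1: "s1 \<in> {0..1}" "\<pi> = \<gamma> s1" by blast
      obtain s where s: "\<bar>s - t\<bar> \<le> 1/2" "s \<in> {-2..3}" "\<gamma> s = \<pi>"
      proof (cases "t - s1 > 1/2")
        case True
        show ?thesis by (rule that[of "s1 + 1"]) (use True t s1 periodic in auto)
      next
        case False
        show ?thesis
        proof (cases "t - s1 < - 1/2")
          case True
          have "\<gamma> (s1 - 1) = \<gamma> s1" using periodic[of "s1 - 1"] by simp
          then show ?thesis by (intro that[of "s1 - 1"]) (use True t s1 in auto)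
        next
          case F2: False
          show ?thesis by (rule that[of s1]) (use False F2 t s1 in \<open>auto simp: abs_if\<close>)
        qed
      qed
      have dist: "norm (\<gamma> s - \<gamma> t) < m"
      proof -
        have "dist p \<pi> \<le> dist p (\<gamma> t)" using \<pi>(2) gamma_closure by blast
        then have "norm (p - \<pi>) \<le> norm (p - \<gamma> t)" by (simp add: dist_norm)
        moreover have "norm (\<gamma> s - \<gamma> t) \<le> norm (p - \<pi>) + norm (p - \<gamma> t)"
          using s(3) norm_triangle_ineq4[of "p - \<gamma> t" "p - \<pi>"] by (simp add: norm_minus_commute)
        ultimately show ?thesis using pr m(1) by linarith
      qed
      define u where "u = s - t"
      have ut: "t + u = s" by (simp add: u_def)
      have close: "\<bar>u\<bar> < \<delta>1"
      proof (rule ccontr)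
        assume "\<not> \<bar>u\<bar> < \<delta>1"
        then have "m \<le> norm (\<gamma> (t+u) - \<gamma> t)" using m(2)[OF t, of u] s(1) by (simp add: u_def)
        then show False using dist ut by simp
      qed
      have u: "\<bar>u\<bar> < \<delta>" "\<bar>u\<bar> \<le> 1" using close by (auto simp: \<delta>1_def)
      have tI: "t \<in> II" "t + u \<in> II" using t s(2) ut by (auto simp: II_mem)
      have "a \<bullet> nn s < 0"
      proof (rule support_unique(2)[OF s(2) a0])
        fix y assume "y \<in> closure \<Omega>"
        from dot[OF this] show "a \<bullet> y \<le> a \<bullet> \<gamma> s" using s(3) by (simp add: inner_diff_right)
      qed
      then have V: "(p - \<gamma> (t+u)) \<bullet> nn (t+u) < 0" using ut s(3) by (simp add: a_def inner_commute)
      have kt: "k0 \<le> \<kappa> t" "\<kappa> t \<le> k1" using k(2)[of t] t by auto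
      have ex: "\<bar>(p - \<gamma> (t+u)) \<bullet> nn (t+u) - (((p - \<gamma> t) \<bullet> nn t) + u^2 * \<kappa> t / 2 - u * \<kappa> t * ((p - \<gamma> t) \<bullet> g1 t))\<bar>
         \<le> \<epsilon> * u^2 * (1 + k1) + \<epsilon> * \<bar>u\<bar> * (\<bar>(p - \<gamma> t) \<bullet> g1 t\<bar> + \<bar>(p - \<gamma> t) \<bullet> nn t\<bar> + \<bar>u\<bar> * (2 + k1/2))"
        using e by (intro expansion[OF u(2) e(1) _ kt(2) \<delta>(2)[OF tI u(1)] \<delta>(3)[OF tI u(1)]]) auto
      have "(p - \<gamma> (t+u)) \<bullet> nn (t+u) \<ge> 0"
        by (rule LM_arith[OF k(1) kt e u(2) _ ex]) (use pz in \<open>simp add: K2_def\<close>)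
      then show False using V by simp
    qed
  qed
qed

end



lemma box2_measure:
  fixes a b :: real assumes "a \<ge> 0" "b \<ge> 0"
  shows "measure lebesgue (cbox (vector[-a,-b]) (vector[a,b]) :: (real^2) set) = 4*a*b"
proof -
  have "0 \<in> (cbox (vector[-a,-b]) (vector[a,b]) :: (real^2) set)"
    using assms by (simp add: mem_box_cart forall_2)
  then have ne: "cbox (vector[-a,-b]) (vector[a,b]) \<noteq> ({} :: (real^2) set)" by blast
  have "measure lebesgue (cbox (vector[-a,-b]) (vector[a,b]) :: (real^2) set) = Henstock_Kurzweil_Integration.content (cbox (vector[-a,-b]) (vector[a,b]) :: (real^2) set)"
    by (simp add: measure_completion)
  also have "\<dots> = 4*a*b" using content_cbox_cart[OF ne] by (simp add: UNIV_2)
  finally show ?thesis .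
qed

lemma rect_measure:
  fixes T n c :: "real^2"
  assumes o: "T \<bullet> T = 1" "n \<bullet> n = 1" "T \<bullet> n = 0"
    and dec: "\<And>v. v = (v \<bullet> T) *\<^sub>R T + (v \<bullet> n) *\<^sub>R n"
    and ab: "\<alpha> \<ge> 0" "\<beta> \<ge> 0"
  shows "{y. \<bar>(y - c) \<bullet> T\<bar> \<le> \<alpha> \<and> \<bar>(y - c) \<bullet> n\<bar> \<le> \<beta>} \<in> lmeasurable"
    and "measure lebesgue {y. \<bar>(y - c) \<bullet> T\<bar> \<le> \<alpha> \<and> \<bar>(y - c) \<bullet> n\<bar> \<le> \<beta>} = 4 * \<alpha> * \<beta>"
proof -
  define L where "L = (\<lambda>x::real^2. x$1 *\<^sub>R T + x$2 *\<^sub>R n)"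
  define B where "B = (cbox (vector[-\<alpha>,-\<beta>]) (vector[\<alpha>,\<beta>]) :: (real^2) set)"
  have lin: "linear L" unfolding L_def by (rule linearI) (simp_all add: algebra_simps)
  have oL: "orthogonal_transformation L"
    unfolding orthogonal_transformation_def
  proof (intro conjI lin allI)
    fix v w :: "real^2"
    have "L v \<bullet> L w = v$1*w$1 + v$2*w$2" using o by (simp add: L_def inner_add_left inner_add_right inner_commute)
    then show "L v \<bullet> L w = v \<bullet> w" by (simp add: inner2)
  qed
  have o': "n \<bullet> T = 0" using o(3) by (simp add: inner_commute)
  have LT: "L x \<bullet> T = x$1" "L x \<bullet> n = x$2" for x
    using o o' by (simp_all add: L_def inner_add_left)
  have eq: "{y. \<bar>(y - c) \<bullet> T\<bar> \<le> \<alpha> \<and> \<bar>(y - c) \<bullet> n\<bar> \<le> \<beta>} = (+) c ` (L ` B)"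
  proof (intro set_eqI iffI)
    fix y assume y: "y \<in> {y. \<bar>(y - c) \<bullet> T\<bar> \<le> \<alpha> \<and> \<bar>(y - c) \<bullet> n\<bar> \<le> \<beta>}"
    define x where "x = (vector [(y - c) \<bullet> T, (y - c) \<bullet> n] :: real^2)"
    have "x \<in> B" using y by (auto simp: B_def x_def mem_box_cart forall_2)
    moreover have "y = c + L x" using dec[of "y - c"] by (simp add: L_def x_def algebra_simps)
    ultimately show "y \<in> (+) c ` (L ` B)" by blast
  next
    fix y assume "y \<in> (+) c ` (L ` B)"
    then obtain x where x: "x \<in> B" "y = c + L x" by blast
    then show "y \<in> {y. \<bar>(y - c) \<bullet> T\<bar> \<le> \<alpha> \<and> \<bar>(y - c) \<bullet> n\<bar> \<le> \<beta>}"
      by (auto simp: LT B_def mem_box_cart forall_2 abs_le_iff)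
  qed
  have cB: "compact B" by (simp add: B_def)
  have cL: "continuous_on UNIV L" using lin by (simp add: linear_continuous_on linear_conv_bounded_linear)
  have "compact (L ` B)" by (rule compact_continuous_image[OF continuous_on_subset[OF cL] cB]) simp
  then have "compact ((\<lambda>x. c + x) ` (L ` B))" by (rule compact_translation)
  then have "compact ((+) c ` (L ` B))" by simp
  then show "{y. \<bar>(y - c) \<bullet> T\<bar> \<le> \<alpha> \<and> \<bar>(y - c) \<bullet> n\<bar> \<le> \<beta>} \<in> lmeasurable"
    using eq lmeasurable_compact by simp
  have "measure lebesgue ((+) c ` (L ` B)) = measure lebesgue (L ` B)" by (rule measure_translation)
  also have "\<dots> = measure lebesgue B" by (rule measure_orthogonal_image[OF oL]) (simp add: B_def)
  also have "\<dots> = 4 * \<alpha> * \<beta>" using box2_measure[OF ab] by (simp add: B_def)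
  finally show "measure lebesgue {y. \<bar>(y - c) \<bullet> T\<bar> \<le> \<alpha> \<and> \<bar>(y - c) \<bullet> n\<bar> \<le> \<beta>} = 4 * \<alpha> * \<beta>"
    using eq by simp
qed

lemma cov_scale:
  fixes \<Omega> :: "(real^2) set"
  shows "covariogram (half_set \<Omega>) x = measure lebesgue {z. z \<in> \<Omega> \<and> 2 *\<^sub>R x - z \<in> \<Omega>} / 4"
proof -
  have eq: "half_set \<Omega> \<inter> (\<lambda>y. x - y) ` half_set \<Omega> = (\<lambda>z. (1/2) *\<^sub>R z + 0) ` {z. z \<in> \<Omega> \<and> 2 *\<^sub>R x - z \<in> \<Omega>}"
  proof (intro set_eqI iffI)
    fix y assume "y \<in> half_set \<Omega> \<inter> (\<lambda>y. x - y) ` half_set \<Omega>"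
    then obtain z w where zw: "z \<in> \<Omega>" "y = (1/2) *\<^sub>R z" "w \<in> \<Omega>" "y = x - (1/2) *\<^sub>R w"
      by (auto simp: half_set_def)
    have "2 *\<^sub>R x - z = w" using zw(2,4) by (simp add: algebra_simps)
    then show "y \<in> (\<lambda>z. (1/2) *\<^sub>R z + 0) ` {z. z \<in> \<Omega> \<and> 2 *\<^sub>R x - z \<in> \<Omega>}"
      using zw by auto
  next
    fix y assume "y \<in> (\<lambda>z. (1/2) *\<^sub>R z + 0) ` {z. z \<in> \<Omega> \<and> 2 *\<^sub>R x - z \<in> \<Omega>}"
    then obtain z where z: "z \<in> \<Omega>" "2 *\<^sub>R x - z \<in> \<Omega>" "y = (1/2) *\<^sub>R z" by auto
    have "y = x - (1/2) *\<^sub>R (2 *\<^sub>R x - z)" using z(3) by (simp add: algebra_simps)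
    moreover have "y \<in> half_set \<Omega>" using z unfolding half_set_def by auto
    moreover have "(1/2) *\<^sub>R (2 *\<^sub>R x - z) \<in> half_set \<Omega>" using z(2) unfolding half_set_def by blast
    ultimately show "y \<in> half_set \<Omega> \<inter> (\<lambda>y. x - y) ` half_set \<Omega>" by blast
  qed
  show ?thesis
    unfolding covariogram_def eq measure_lebesgue_affine by (simp add: power2_eq_square)
qed



context curve_setup begin

definition KK where "KK c = {z. z \<in> \<Omega> \<and> 2 *\<^sub>R c - z \<in> \<Omega>}"

lemma KK_lmeasurable: "KK c \<in> lmeasurable"
proof -
  have "KK c = \<Omega> \<inter> (\<lambda>z. 2 *\<^sub>R c - z) -` \<Omega>" by (auto simp: KK_def)
  moreover have "open ((\<lambda>z. 2 *\<^sub>R c - z) -` \<Omega>)"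
    by (rule continuous_open_vimage[OF open_\<Omega>]) (intro continuous_intros)
  ultimately have "open (KK c)" using open_\<Omega> by auto
  moreover have "bounded (KK c)" using bdd by (rule bounded_subset) (auto simp: KK_def)
  ultimately show ?thesis by (simp add: lmeasurable_open)
qed

lemma Omega_lmeasurable: "\<Omega> \<in> lmeasurable" using bdd open_\<Omega> by (simp add: lmeasurable_open)

lemma orth: "g1 t \<bullet> g1 t = 1" "nn t \<bullet> nn t = 1" "g1 t \<bullet> nn t = 0"
  by (simp_all add: norm_eq_1[symmetric])

lemma rect_t:
  assumes "\<alpha> \<ge> 0" "\<beta> \<ge> 0"
  shows "{y. \<bar>(y - c) \<bullet> g1 t\<bar> \<le> \<alpha> \<and> \<bar>(y - c) \<bullet> nn t\<bar> \<le> \<beta>} \<in> lmeasurable"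
    and "measure lebesgue {y. \<bar>(y - c) \<bullet> g1 t\<bar> \<le> \<alpha> \<and> \<bar>(y - c) \<bullet> nn t\<bar> \<le> \<beta>} = 4 * \<alpha> * \<beta>"
  using rect_measure[OF orth basis2 assms] by auto

lemma upper_bound:
  obtains CU where "CU > 0" "\<And>t s. t \<in> {0..1} \<Longrightarrow> 0 < s \<Longrightarrow> s \<le> 1 \<Longrightarrow>
     measure lebesgue (KK ((1 - s) *\<^sub>R \<gamma> t)) \<le> CU * (s * sqrt s)"
proof -
  obtain K h0 where Kh: "K > 0" "h0 > 0"
    "\<And>t y h. t \<in> {0..1} \<Longrightarrow> y \<in> closure \<Omega> \<Longrightarrow> 0 < h \<Longrightarrow> h \<le> h0 \<Longrightarrow>
       (y - \<gamma> t) \<bullet> nn t \<le> h \<Longrightarrow> \<bar>(y - \<gamma> t) \<bullet> g1 t\<bar> \<le> K * sqrt h"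
    using upper_width by blast
  obtain M where M: "M > 0" "\<And>y. y \<in> closure \<Omega> \<Longrightarrow> norm y \<le> M" using bound_closure by blast
  obtain \<beta> where \<beta>: "\<beta> > 0" "ball 0 \<beta> \<subseteq> \<Omega>" "\<And>s. s \<in> {-2..3} \<Longrightarrow> \<gamma> s \<bullet> nn s \<le> - \<beta>/2"
    using depth by blast
  define m\<Omega> where "m\<Omega> = measure lebesgue \<Omega>"
  have m0: "m\<Omega> \<ge> 0" by (simp add: m\<Omega>_def)
  define s0 where "s0 = h0 / (2 * M)"
  have s0: "s0 > 0" using Kh(2) M(1) by (simp add: s0_def)
  define CU where "CU = max 1 (max (2 * K * (2 * M) * sqrt (2 * M)) (m\<Omega> / (s0 * sqrt s0)))"
  have CU: "CU > 0" by (simp add: CU_def)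
  show ?thesis
  proof (rule that[OF CU])
    fix t s :: real assume t: "t \<in> {0..1}" and s: "0 < s" "s \<le> 1"
    define q where "q = \<gamma> t"
    define c where "c = (1 - s) *\<^sub>R q"
    define B where "B = - (q \<bullet> nn t)"
    have t2: "t \<in> {-2..3}" using t by auto
    have B0: "B \<ge> \<beta>/2" using \<beta>(3)[OF t2] by (simp add: B_def q_def)
    have BM: "B \<le> M"
    proof -
      have "\<bar>q \<bullet> nn t\<bar> \<le> norm q * norm (nn t)" by (rule Cauchy_Schwarz_ineq2)
      then have "\<bar>q \<bullet> nn t\<bar> \<le> norm q" by simp
      moreover have "norm q \<le> M" using M(2) gamma_closure by (simp add: q_def)
      ultimately show ?thesis by (simp add: B_def)
    qed
    define h where "h = 2 * s * B"
    have h0: "h > 0" using s B0 \<beta>(1) by (simp add: h_def)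
    have KKsub: "(y - q) \<bullet> nn t \<ge> 0 \<and> (y - q) \<bullet> nn t \<le> h \<and> y \<in> closure \<Omega>" if y: "y \<in> KK c" for y
    proof -
      have y1: "y \<in> closure \<Omega>" "2 *\<^sub>R c - y \<in> closure \<Omega>" using y closure_subset by (auto simp: KK_def)
      have a: "(y - q) \<bullet> nn t \<ge> 0" using support_line[OF t2 y1(1)] by (simp add: q_def)
      have "(2 *\<^sub>R c - y - q) \<bullet> nn t \<ge> 0" using support_line[OF t2 y1(2)] by (simp add: q_def)
      moreover have "2 *\<^sub>R c - y - q = - (y - q) - (2 * s) *\<^sub>R q"
      proof -
        have "2 *\<^sub>R ((1 - s) *\<^sub>R q) = (1 - s) *\<^sub>R q + (1 - s) *\<^sub>R q" by (rule scaleR_2)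
        moreover have "(2 * s) *\<^sub>R q = s *\<^sub>R q + s *\<^sub>R q" by (simp add: scaleR_add_left[symmetric])
        ultimately show ?thesis by (simp add: scaleR_diff_left c_def)
      qed
      ultimately have "(y - q) \<bullet> nn t \<le> - (2 * s) * (q \<bullet> nn t)"
        by (simp add: inner_diff_left)
      then show ?thesis using a y1(1) by (simp add: h_def B_def)
    qed
    have KKm: "KK c \<in> lmeasurable" by (rule KK_lmeasurable)
    show "measure lebesgue (KK ((1 - s) *\<^sub>R \<gamma> t)) \<le> CU * (s * sqrt s)"
    proof (cases "h \<le> h0")
      case True
      define R where "R = {y. \<bar>(y - (q + (h/2) *\<^sub>R nn t)) \<bullet> g1 t\<bar> \<le> K * sqrt h \<and> \<bar>(y - (q + (h/2) *\<^sub>R nn t)) \<bullet> nn t\<bar> \<le> h/2}"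
      have Rm: "R \<in> lmeasurable" "measure lebesgue R = 4 * (K * sqrt h) * (h/2)"
        using rect_t[of "K * sqrt h" "h/2" "q + (h/2) *\<^sub>R nn t" t] Kh(1) h0 by (auto simp: R_def)
      have sub: "KK c \<subseteq> R"
      proof
        fix y assume y: "y \<in> KK c"
        note yy = KKsub[OF y]
        have w: "\<bar>(y - q) \<bullet> g1 t\<bar> \<le> K * sqrt h"
          using Kh(3)[OF t _ h0 True] yy by (simp add: q_def)
        have e1: "(y - (q + (h/2) *\<^sub>R nn t)) \<bullet> g1 t = (y - q) \<bullet> g1 t"
          using orth(3)[of t] by (simp add: inner_diff_left inner_add_left inner_commute[of "nn t" "g1 t"])
        have e2: "(y - (q + (h/2) *\<^sub>R nn t)) \<bullet> nn t = (y - q) \<bullet> nn t - h/2"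
          by (simp add: inner_diff_left inner_add_left)
        have z1: "0 \<le> (y - q) \<bullet> nn t" "(y - q) \<bullet> nn t \<le> h" using yy by auto
        have "\<bar>(y - q) \<bullet> nn t - h/2\<bar> \<le> h/2" unfolding abs_le_iff using z1 by auto
        then show "y \<in> R" using w by (simp only: R_def e1 e2 mem_Collect_eq)
      qed
      have "measure lebesgue (KK c) \<le> measure lebesgue R"
        by (rule measure_mono_fmeasurable[OF sub fmeasurableD[OF KKm] Rm(1)])
      also have "\<dots> = 2 * K * (h * sqrt h)" using Rm(2) by (simp add: algebra_simps)
      also have "\<dots> \<le> 2 * K * ((2 * M) * sqrt (2 * M) * (s * sqrt s))"
      proof -
        have hle: "h \<le> (2 * M) * s" using BM s by (simp add: h_def)
        have "sqrt h \<le> sqrt ((2 * M) * s)" using hle by simp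
        also have "\<dots> = sqrt (2 * M) * sqrt s" by (simp add: real_sqrt_mult)
        finally have "h * sqrt h \<le> ((2 * M) * s) * (sqrt (2 * M) * sqrt s)"
          using hle h0 by (intro mult_mono) auto
        then show ?thesis using Kh(1) by (simp add: algebra_simps)
      qed
      also have "\<dots> \<le> CU * (s * sqrt s)"
      proof -
        have "2 * K * (2 * M) * sqrt (2 * M) \<le> CU" by (simp add: CU_def)
        then show ?thesis using s by (simp add: mult_right_mono mult.assoc[symmetric])
      qed
      finally show ?thesis by (simp add: c_def q_def)
    next
      case False
      have "s > s0"
      proof -
        have "h0 < 2 * s * B" using False by (simp add: h_def)
        also have "\<dots> \<le> 2 * s * M" using BM s by simp
        finally show ?thesis using M(1) by (simp add: s0_def field_simps)
      qed
      then have ss: "s0 * sqrt s0 \<le> s * sqrt s" using s0 by (intro mult_mono) auto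
      have "measure lebesgue (KK c) \<le> m\<Omega>"
        unfolding m\<Omega>_def by (rule measure_mono_fmeasurable[OF _ fmeasurableD[OF KKm] Omega_lmeasurable]) (auto simp: KK_def)
      also have "\<dots> = (m\<Omega> / (s0 * sqrt s0)) * (s0 * sqrt s0)" using s0 by simp
      also have "\<dots> \<le> CU * (s * sqrt s)"
      proof (rule mult_mono)
        show "m\<Omega> / (s0 * sqrt s0) \<le> CU" by (simp add: CU_def)
      qed (use ss CU s0 m0 in auto)
      finally show ?thesis by (simp add: c_def q_def)
    qed
  qed
qed

lemma ball_in:
  assumes q: "q \<in> closure \<Omega>" and s: "0 < s" "s \<le> 1" and b: "ball 0 \<beta> \<subseteq> \<Omega>"
  shows "ball ((1 - s) *\<^sub>R q) (s * \<beta>) \<subseteq> \<Omega>"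
proof
  fix y assume y: "y \<in> ball ((1 - s) *\<^sub>R q) (s * \<beta>)"
  define v where "v = y - (1 - s) *\<^sub>R q"
  define w where "w = (1/s) *\<^sub>R v"
  have nv: "norm v < s * \<beta>" using y by (simp add: dist_norm norm_minus_commute v_def)
  have "norm w = norm v / s" using s by (simp add: w_def)
  then have "norm w < \<beta>" using nv s by (simp add: pos_divide_less_eq mult.commute)
  then have "w \<in> \<Omega>" using b by auto
  then have wi: "w \<in> interior \<Omega>" using open_\<Omega> by (simp add: interior_open)
  have "q - s *\<^sub>R (q - w) \<in> interior \<Omega>"
    by (rule mem_interior_closure_convex_shrink[OF conv wi q s])
  moreover have "q - s *\<^sub>R (q - w) = y" using s by (simp add: w_def v_def algebra_simps)
  ultimately show "y \<in> \<Omega>" using open_\<Omega> by (simp add: interior_open)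
qed

lemma rect_sym:
  assumes "{y. \<bar>(y - c) \<bullet> g1 t\<bar> \<le> a \<and> \<bar>(y - c) \<bullet> nn t\<bar> \<le> b} \<subseteq> \<Omega>"
  shows "{y. \<bar>(y - c) \<bullet> g1 t\<bar> \<le> a \<and> \<bar>(y - c) \<bullet> nn t\<bar> \<le> b} \<subseteq> KK c"
proof
  fix y assume y: "y \<in> {y. \<bar>(y - c) \<bullet> g1 t\<bar> \<le> a \<and> \<bar>(y - c) \<bullet> nn t\<bar> \<le> b}"
  have e: "2 *\<^sub>R c - y - c = - (y - c)" by (simp add: scaleR_2)
  have ab: "\<bar>(- (y - c)) \<bullet> u\<bar> = \<bar>(y - c) \<bullet> u\<bar>" for u by (simp only: inner_minus_left abs_minus_cancel)
  have "2 *\<^sub>R c - y \<in> {y. \<bar>(y - c) \<bullet> g1 t\<bar> \<le> a \<and> \<bar>(y - c) \<bullet> nn t\<bar> \<le> b}"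
    using y by (simp only: e ab mem_Collect_eq)
  then show "y \<in> KK c" using y assms by (auto simp: KK_def)
qed

lemma lower_bound:
  obtains CL where "CL > 0" "\<And>t s. t \<in> {0..1} \<Longrightarrow> 0 < s \<Longrightarrow> s \<le> 1 \<Longrightarrow>
     CL * (s * sqrt s) \<le> measure lebesgue (KK ((1 - s) *\<^sub>R \<gamma> t))"
proof -
  obtain \<rho> K2 where LM: "\<rho> > 0" "K2 > 0"
    "\<And>t p. t \<in> {0..1} \<Longrightarrow> norm (p - \<gamma> t) \<le> \<rho> \<Longrightarrow>
       (p - \<gamma> t) \<bullet> nn t \<ge> K2 * ((p - \<gamma> t) \<bullet> g1 t)^2 \<Longrightarrow> p \<in> closure \<Omega>"
    using local_membership by blast
  obtain M where M: "M > 0" "\<And>y. y \<in> closure \<Omega> \<Longrightarrow> norm y \<le> M" using bound_closure by blast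
  obtain \<beta> where \<beta>: "\<beta> > 0" "ball 0 \<beta> \<subseteq> \<Omega>" "\<And>s. s \<in> {-2..3} \<Longrightarrow> \<gamma> s \<bullet> nn s \<le> - \<beta>/2"
    using depth by blast
  define B' where "B' = \<beta>/2"
  have B'0: "B' > 0" using \<beta>(1) by (simp add: B'_def)
  define s1 where "s1 = min 1 (min (B' / (32 * K2 * M^2)) (32 * K2 * \<rho>^2 / (25 * B')))"
  have s1: "s1 > 0" "s1 \<le> 1" using B'0 LM(1,2) M(1) by (auto simp: s1_def)
  define CL where "CL = min (B' * sqrt (B' / (32 * K2))) (\<beta>^2/4 * sqrt s1)"
  have CL: "CL > 0" using B'0 LM(2) s1 \<beta>(1) by (simp add: CL_def)
  show ?thesis
  proof (rule that[OF CL])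
    fix t s :: real assume t: "t \<in> {0..1}" and s: "0 < s" "s \<le> 1"
    define q where "q = \<gamma> t"
    define c where "c = (1 - s) *\<^sub>R q"
    define T where "T = g1 t"
    define n where "n = nn t"
    define R where "R = (\<lambda>a b. {y. \<bar>(y - c) \<bullet> T\<bar> \<le> a \<and> \<bar>(y - c) \<bullet> n\<bar> \<le> b})"
    have t2: "t \<in> {-2..3}" using t by auto
    have qc: "q \<in> closure \<Omega>" by (simp add: q_def gamma_closure)
    have qM: "norm q \<le> M" using M(2)[OF qc] .
    define B where "B = - (q \<bullet> n)"
    have BB: "B \<ge> B'" using \<beta>(3)[OF t2] by (simp add: B_def q_def n_def B'_def)
    have BM: "B \<le> M"
    proof -
      have "\<bar>q \<bullet> n\<bar> \<le> norm q * norm n" by (rule Cauchy_Schwarz_ineq2)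
      then show ?thesis using qM by (simp add: B_def n_def)
    qed
    have qT: "\<bar>q \<bullet> T\<bar> \<le> M"
    proof -
      have "\<bar>q \<bullet> T\<bar> \<le> norm q * norm T" by (rule Cauchy_Schwarz_ineq2)
      then show ?thesis using qM by (simp add: T_def)
    qed
    have meas: "measure lebesgue (R a b) \<le> measure lebesgue (KK c)" and Rm: "measure lebesgue (R a b) = 4 * a * b"
      if "R a b \<subseteq> \<Omega>" "a \<ge> 0" "b \<ge> 0" for a b
    proof -
      have sub: "R a b \<subseteq> KK c" using rect_sym[of c t a b] that(1) by (simp add: R_def T_def n_def)
      have Rl: "R a b \<in> lmeasurable" using rect_t(1)[OF that(2,3), of c t] by (simp add: R_def T_def n_def)
      show "measure lebesgue (R a b) \<le> measure lebesgue (KK c)"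
        by (rule measure_mono_fmeasurable[OF sub fmeasurableD[OF Rl] KK_lmeasurable])
      show "measure lebesgue (R a b) = 4 * a * b"
        using rect_t(2)[OF that(2,3), of c t] by (simp add: R_def T_def n_def)
    qed
    have goal: "CL * (s * sqrt s) \<le> measure lebesgue (KK c)"
    proof (cases "s \<le> s1")
      case True
      define a where "a = sqrt (s * B' / (32 * K2))"
      define b where "b = s * B' / 4"
      have a0: "a > 0" using s B'0 LM(2) by (simp add: a_def)
      have b0: "b > 0" using s B'0 by (simp add: b_def)
      have a2: "a^2 = s * B' / (32 * K2)" using s B'0 LM(2) by (simp add: a_def)
      have sMa: "s * M \<le> a"
      proof -
        have "s \<le> B' / (32 * K2 * M^2)" using True by (simp add: s1_def)
        then have "s * M^2 \<le> (B' / (32 * K2 * M^2)) * M^2" by (rule mult_right_mono) simp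
        also have "\<dots> = B' / (32 * K2)" using M(1) by (simp add: field_simps)
        finally have "s * M^2 \<le> B' / (32 * K2)" .
        then have "s * (s * M^2) \<le> s * (B' / (32 * K2))" using s by (intro mult_left_mono) auto
        then have "(s * M)^2 \<le> a^2" using a2 by (simp add: power2_eq_square algebra_simps)
        then show ?thesis using a0 by (simp add: power2_le_iff_abs_le)
      qed
      have a5: "5 * a \<le> \<rho>"
      proof -
        have "s \<le> 32 * K2 * \<rho>^2 / (25 * B')" using True by (simp add: s1_def)
        then have "25 * (s * B' / (32 * K2)) \<le> \<rho>^2" using B'0 LM(2) by (simp add: field_simps)
        then have "(5 * a)^2 \<le> \<rho>^2" using a2 by (simp add: power2_eq_square algebra_simps)
        from power2_le_imp_le[OF this] show ?thesis using LM(1) by simp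
      qed
      have R2: "R (2*a) (2*b) \<subseteq> closure \<Omega>"
      proof
        fix y assume "y \<in> R (2*a) (2*b)"
        then have y: "\<bar>(y - c) \<bullet> T\<bar> \<le> 2*a" "\<bar>(y - c) \<bullet> n\<bar> \<le> 2*b" by (auto simp: R_def)
        have yq: "y - q = (y - c) + (- s) *\<^sub>R q" by (simp add: c_def algebra_simps)
        define x where "x = (y - q) \<bullet> T"
        define z where "z = (y - q) \<bullet> n"
        have xe: "x = (y - c) \<bullet> T - s * (q \<bullet> T)" unfolding x_def yq by (simp only: inner_add_left inner_scaleR_left) (simp?)
        have ze: "z = (y - c) \<bullet> n + s * B" unfolding z_def yq by (simp only: inner_add_left inner_scaleR_left) ((simp add: B_def)?)
        have sqT: "\<bar>s * (q \<bullet> T)\<bar> \<le> s * M" using qT s by (simp add: abs_mult mult_left_mono)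
        have x3: "\<bar>x\<bar> \<le> 3 * a" using xe y(1) sqT sMa by linarith
        have sB: "s * B' \<le> s * B" "s * B \<le> s * M" using BB BM s by (simp_all add: mult_left_mono)
        have sBM: "s * B' \<le> s * M" using sB by linarith
        have yn: "- (2*b) \<le> (y - c) \<bullet> n" "(y - c) \<bullet> n \<le> 2*b"
          using abs_le_D1[OF y(2)] abs_le_D2[OF y(2)] by linarith+
        have b2: "2 * b = s * B' / 2" by (simp add: b_def)
        have z1: "z \<ge> s * B' / 2" using ze yn b2 sB by linarith
        have z2: "z \<le> 2 * a" using ze yn b2 sB sBM sMa by linarith
        have "\<bar>x\<bar>^2 \<le> (3 * a)^2" by (rule power_mono[OF x3]) simp
        then have "x^2 \<le> (3 * a)^2" by simp
        then have "K2 * x^2 \<le> K2 * (9 * a^2)" using LM(2) by (simp add: mult_left_mono power2_eq_square)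
        also have "\<dots> = 9 * (s * B') / 32" using a2 LM(2) by (simp add: field_simps)
        also have "\<dots> \<le> z"
        proof -
          have "s * B' > 0" using s B'0 by simp
          then show ?thesis using z1 by linarith
        qed
        finally have kz: "K2 * x^2 \<le> z" .
        have "norm (y - q) \<le> \<bar>x\<bar> + \<bar>z\<bar>" using norm_basis[of "y - q" t] by (simp add: x_def z_def T_def n_def)
        also have "\<dots> \<le> \<rho>"
        proof -
          have "s * B' / 2 > 0" using s B'0 by simp
          then have "\<bar>z\<bar> = z" using z1 by simp
          then show ?thesis using x3 z2 a5 by linarith
        qed
        finally have nr: "norm (y - \<gamma> t) \<le> \<rho>" by (simp add: q_def)
        show "y \<in> closure \<Omega>" using LM(3)[OF t nr] kz by (simp add: x_def z_def q_def T_def n_def)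
      qed
      define Oset where "Oset = {y. \<bar>(y - c) \<bullet> T\<bar> < 2*a \<and> \<bar>(y - c) \<bullet> n\<bar> < 2*b}"
      have oO: "open Oset" unfolding Oset_def
        by (intro open_Collect_conj open_Collect_less continuous_intros)
      have "Oset \<subseteq> R (2*a) (2*b)" by (auto simp: Oset_def R_def)
      then have "Oset \<subseteq> closure \<Omega>" using R2 by blast
      then have "Oset \<subseteq> interior (closure \<Omega>)" using oO interior_maximal by blast
      then have OO: "Oset \<subseteq> \<Omega>" using convex_interior_closure[OF conv] open_\<Omega> by (simp add: interior_open)
      have "R a b \<subseteq> Oset" using a0 b0 by (auto simp: Oset_def R_def)
      then have Rsub: "R a b \<subseteq> \<Omega>" using OO by blast
      have "CL * (s * sqrt s) \<le> (B' * sqrt (B' / (32 * K2))) * (s * sqrt s)"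
        using s by (intro mult_right_mono) (auto simp: CL_def)
      also have "\<dots> = 4 * a * b"
        using s B'0 LM(2) by (simp add: a_def b_def real_sqrt_mult real_sqrt_divide algebra_simps)
      also have "\<dots> = measure lebesgue (R a b)" using Rm[OF Rsub] a0 b0 by simp
      also have "\<dots> \<le> measure lebesgue (KK c)" using meas[OF Rsub] a0 b0 by simp
      finally show ?thesis .
    next
      case False
      define a where "a = s * \<beta> / 4"
      have a0: "a > 0" using s \<beta>(1) by (simp add: a_def)
      have "R a a \<subseteq> ball c (s * \<beta>)"
      proof
        fix y assume "y \<in> R a a"
        then have y: "\<bar>(y - c) \<bullet> T\<bar> \<le> a" "\<bar>(y - c) \<bullet> n\<bar> \<le> a" by (auto simp: R_def)
        have "norm (y - c) \<le> \<bar>(y - c) \<bullet> T\<bar> + \<bar>(y - c) \<bullet> n\<bar>"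
          using norm_basis[of "y - c" t] by (simp add: T_def n_def)
        also have "\<dots> < s * \<beta>"
        proof -
          have "s * \<beta> > 0" using s \<beta>(1) by simp
          then show ?thesis using y unfolding a_def by linarith
        qed
        finally show "y \<in> ball c (s * \<beta>)" by (simp add: dist_norm norm_minus_commute)
      qed
      then have Rsub: "R a a \<subseteq> \<Omega>" using ball_in[OF qc s \<beta>(2)] by (simp add: c_def)
      have sq: "sqrt s1 \<le> sqrt s" using False by simp
      have "CL * (s * sqrt s) \<le> (\<beta>^2/4 * sqrt s1) * (s * sqrt s)"
        using s by (intro mult_right_mono) (auto simp: CL_def)
      also have "\<dots> \<le> (\<beta>^2/4 * sqrt s) * (s * sqrt s)"
        using s sq by (intro mult_right_mono mult_left_mono) auto
      also have "\<dots> = 4 * a * a" using s by (simp add: a_def power2_eq_square algebra_simps)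
      also have "\<dots> = measure lebesgue (R a a)" using Rm[OF Rsub] a0 by simp
      also have "\<dots> \<le> measure lebesgue (KK c)" using meas[OF Rsub] a0 by simp
      finally show ?thesis .
    qed
    then show "CL * (s * sqrt s) \<le> measure lebesgue (KK ((1 - s) *\<^sub>R \<gamma> t))" by (simp add: c_def q_def)
  qed
qed

lemma cov_KK: "covariogram (half_set \<Omega>) x = measure lebesgue (KK x) / 4"
  by (simp add: cov_scale KK_def)

lemma KK_le: "measure lebesgue (KK x) \<le> measure lebesgue \<Omega>"
  by (rule measure_mono_fmeasurable[OF _ fmeasurableD[OF KK_lmeasurable] Omega_lmeasurable]) (auto simp: KK_def)

end

theorem mainTheorem19:
  fixes \<Omega> :: "(real^2) set" and \<gamma> :: "real \<Rightarrow> real^2"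
  assumes open_\<Omega>: "open \<Omega>" and conv: "convex \<Omega>" and bdd: "bounded \<Omega>"
    and zero_in: "0 \<in> \<Omega>" and omega0: "omega \<Omega> 0 = 1"
    and periodic: "\<And>t. \<gamma> (t + 1) = \<gamma> t"
    and inj: "inj_on \<gamma> {0..<1}"
    and image: "\<gamma> ` {0..1} = frontier \<Omega>"
    and diff1: "\<And>t. \<gamma> differentiable (at t)"
    and diff2: "\<And>t. (\<lambda>s. vector_derivative \<gamma> (at s)) differentiable (at t)"
    and cont2: "continuous_on UNIV
       (\<lambda>t. vector_derivative (\<lambda>s. vector_derivative \<gamma> (at s)) (at t))"
    and arclen: "\<And>t. norm (vector_derivative \<gamma> (at t)) = 1"
    and curv: "\<And>t. norm (vector_derivative (\<lambda>s. vector_derivative \<gamma> (at s)) (at t)) > 0"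
  shows "\<exists>c C. c > 0 \<and> C > 0 \<and>
    (\<forall>r t. 0 \<le> r \<and> r < 1 \<and> 0 \<le> t \<and> t < 1 \<longrightarrow>
       c * (1 - r) powr (3/2) \<le> omega (half_set \<Omega>) (r *\<^sub>R \<gamma> t) \<and>
       omega (half_set \<Omega>) (r *\<^sub>R \<gamma> t) \<le> C * (1 - r) powr (3/2))"
proof -
  interpret curve_setup \<Omega> \<gamma>
    by (unfold_locales) (use open_\<Omega> conv bdd zero_in periodic inj image diff1 diff2 cont2 arclen curv in auto)
  obtain CU where CU: "CU > 0" "\<And>t s. t \<in> {0..1} \<Longrightarrow> 0 < s \<Longrightarrow> s \<le> 1 \<Longrightarrow>
     measure lebesgue (KK ((1 - s) *\<^sub>R \<gamma> t)) \<le> CU * (s * sqrt s)"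
    using upper_bound by blast
  obtain CL where CL: "CL > 0" "\<And>t s. t \<in> {0..1} \<Longrightarrow> 0 < s \<Longrightarrow> s \<le> 1 \<Longrightarrow>
     CL * (s * sqrt s) \<le> measure lebesgue (KK ((1 - s) *\<^sub>R \<gamma> t))"
    using lower_bound by blast
  define U where "U = half_set \<Omega>"
  define S0 where "S0 = (SUP y. covariogram U y)"
  have bddA: "bdd_above (range (covariogram U))"
  proof (rule bdd_aboveI2)
    fix y show "covariogram U y \<le> measure lebesgue \<Omega> / 4"
      using KK_le[of y] by (simp add: U_def cov_KK)
  qed
  have S0ge: "covariogram U x \<le> S0" for x
    unfolding S0_def by (rule cSUP_upper[OF _ bddA]) simp
  have low0: "CL / 4 \<le> covariogram U (0 *\<^sub>R \<gamma> 0)"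
    using CL(2)[of 0 1] by (simp add: U_def cov_KK)
  have S0pos: "S0 > 0" using S0ge[of "0 *\<^sub>R \<gamma> 0"] low0 CL(1) by linarith
  show ?thesis
  proof (intro exI conjI allI impI)
    show "CL / 4 / S0 > 0" using CL(1) S0pos by simp
    show "CU / 4 / S0 > 0" using CU(1) S0pos by simp
    fix r t :: real assume rt: "0 \<le> r \<and> r < 1 \<and> 0 \<le> t \<and> t < 1"
    define s where "s = 1 - r"
    have s: "0 < s" "s \<le> 1" using rt by (auto simp: s_def)
    have t: "t \<in> {0..1}" using rt by auto
    have pw: "(1 - r) powr (3/2) = s * sqrt s"
    proof -
      have "s powr (3/2) = s powr (1 + 1/2)" by simp
      also have "\<dots> = s powr 1 * s powr (1/2)" by (rule powr_add)
      also have "\<dots> = s * sqrt s" using s by (simp add: powr_half_sqrt)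
      finally show ?thesis by (simp add: s_def)
    qed
    have x: "r *\<^sub>R \<gamma> t = (1 - s) *\<^sub>R \<gamma> t" by (simp add: s_def)
    have om: "omega (half_set \<Omega>) (r *\<^sub>R \<gamma> t) = measure lebesgue (KK ((1 - s) *\<^sub>R \<gamma> t)) / 4 / S0"
      by (simp add: omega_def cov_KK S0_def U_def x)
    show "CL / 4 / S0 * (1 - r) powr (3/2) \<le> omega (half_set \<Omega>) (r *\<^sub>R \<gamma> t)"
      unfolding om pw using CL(2)[OF t s] S0pos by (simp add: divide_right_mono field_simps)
    show "omega (half_set \<Omega>) (r *\<^sub>R \<gamma> t) \<le> CU / 4 / S0 * (1 - r) powr (3/2)"
      unfolding om pw using CU(2)[OF t s] S0pos by (simp add: divide_right_mono field_simps)
  qed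
qed


end
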